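(* Let $d\in\mathbb{N}$, $\mu_0,\ldots,\mu_d\in\mathbb{R}\setminus\{0\}$, $S_-=\{z\in\mathbb{C}:\operatorname{Im}z\le0\}\setminus\{-\mu_0^{-2},\ldots,-\mu_d^{-2}\}$, $\omega=1+i$, and use the branch $\sqrt{re^{i\theta}}=\sqrt re^{i\theta/2}$ for $r\ge0$, $\theta\in[-\pi,0]$ (so $\sqrt{-1}=-i$). (a) For every $z\in S_-$ the limit $I(z):=\lim_{B\to+\infty}\int_0^B\prod_{j=0}^d\Phi(\mu_j\sqrt z\,\omega y)e^{-\omega^2y^2/2}\omega\,dy$ exists and is finite, and for every $A>0$ it equals \begin{align*} &\int_0^A\prod_{j}\Phi(\mu_j\sqrt z\,\omega y)e^{-\omega^2y^2/2}\omega\,dy+\frac{1}{A\omega}\prod_j\Phi(\mu_j\sqrt z\,\omega A)e^{-\omega^2A^2/2} -\frac{1}{2\omega}\int_{A^2}^\infty\prod_j\Phi(\mu_j\sqrt z\,\omega\sqrt x)\frac{e^{-\omega^2x/2}}{x^{3/2}}dx\\ &+\sum_{\ell=0}^d\frac{\mu_\ell\sqrt z}{\sqrt{2\pi}\omega^2(1+\mu_\ell^2z)}\prod_{j\ne\ell}\Phi(\mu_j\sqrt z\,\omega A)\frac{1}{A^2}e^{-\frac{\omega^2A^2}{2}(1+\mu_\ell^2z)} -\sum_{\ell=0}^d\frac{\mu_\ell\sqrt z}{\sqrt{2\pi}\omega^2(1+\mu_\ell^2z)}\int_{A^2}^\infty\prod_{j\ne\ell}\Phi(\mu_j\sqrt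 z\,\omega\sqrt x)\frac{1}{x^2}e^{-\frac{\omega^2x}{2}(1+\mu_\ell^2z)}dx\\ &+\sum_{0\le\ell_1\ne\ell_2\le d}\frac{\mu_{\ell_1}\mu_{\ell_2}z}{4\pi\omega(1+\mu_{\ell_1}^2z)}\int_{A^2}^\infty\prod_{j\notin\{\ell_1,\ell_2\}}\Phi(\mu_j\sqrt z\,\omega\sqrt x)\frac{1}{x^{3/2}}e^{-\frac{\omega^2x}{2}(1+\mu_{\ell_1}^2z+\mu_{\ell_2}^2z)}dx, \end{align*} with all integrals over $[A^2,\infty)$ absolutely convergent. (b) $z\mapsto I(z)$ is continuous on $S_-$ and analytic on the open lower half-plane $\{\operatorname{Im}z<0\}$.
   Context: $\Phi(z)=\frac12+\frac{1}{\sqrt{2\pi}}\int_0^ze^{-x^2/2}dx$ for $z\in\mathbb{C}$. Products over $j$ range over $j\in\{0,\ldots,d\}$ (minus excluded indices); $\sqrt x>0$ for $x>0$. *)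

theory Defs
  imports "HOL-Complex_Analysis.Complex_Analysis"
begin

definition Phi :: "complex \<Rightarrow> complex" where
  "Phi z = 1/2 + (1 / complex_of_real (sqrt (2*pi))) *
           contour_integral (linepath 0 z) (\<lambda>x. exp (- (x^2) / 2))"

text \<open>Branch of the square root: sqrt(r e^{i theta}) = sqrt r e^{i theta/2} with theta in [-pi,0]
  (relevant on the closed lower half-plane; the argument pi of the negative reals is replaced by -pi).\<close>
definition argm :: "complex \<Rightarrow> real" where
  "argm z = (if Arg z = pi then - pi else Arg z)"

definition sqrtm :: "complex \<Rightarrow> complex" where
  "sqrtm z = complex_of_real (sqrt (cmod z)) * exp (\<i> * complex_of_real (argm z / 2))"

definition omega :: complex where "omega = 1 + \<i>"

definition PPhi :: "(nat \<Rightarrow> real) \<Rightarrow> nat \<Rightarrow> nat set \<Rightarrow> complex \<Rightarrow> complex \<Rightarrow> complex" where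
  "PPhi mu d E z w = (\<Prod>j\<in>{0..d} - E. Phi (complex_of_real (mu j) * sqrtm z * omega * w))"

definition Fint :: "(nat \<Rightarrow> real) \<Rightarrow> nat \<Rightarrow> complex \<Rightarrow> real \<Rightarrow> complex" where
  "Fint mu d z y = PPhi mu d {} z (complex_of_real y) * exp (- (omega^2 * (complex_of_real y)^2) / 2) * omega"

definition Ilim :: "(nat \<Rightarrow> real) \<Rightarrow> nat \<Rightarrow> complex \<Rightarrow> complex" where
  "Ilim mu d z = Lim at_top (\<lambda>B. integral {0..B} (Fint mu d z))"

definition Sminus :: "(nat \<Rightarrow> real) \<Rightarrow> nat \<Rightarrow> complex set" where
  "Sminus mu d = {z. Im z \<le> 0} - {complex_of_real (- 1 / (mu j)^2) | j. j \<in> {0..d}}"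

end

theory Submission
  imports Defs
begin

definition sq :: "complex \<Rightarrow> complex" where
  "sq z = csqrt (\<i> * z) * (1 - \<i>) / complex_of_real (sqrt 2)"

lemma sq_props:
  assumes "Im z \<le> 0"
  shows "(sq z)^2 = z" "Re (sq z) \<ge> 0" "Im (sq z) \<le> 0"
proof -
  define c where "c = csqrt (\<i> * z)"
  have c2: "c^2 = \<i> * z" unfolding c_def by simp
  have a0: "Re c \<ge> 0" unfolding c_def by (rule Re_csqrt)
  have "Re (c^2) = Re c ^2 - Im c ^2" by (simp add: power2_eq_square)
  moreover have "Re (c^2) \<ge> 0" using c2 assms by simp
  ultimately have ab: "\<bar>Im c\<bar> \<le> Re c" using a0
    by (metis abs_le_square_iff abs_of_nonneg diff_ge_0_iff_ge)
  have s2: "(complex_of_real (sqrt 2))^2 = 2"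
    by (metis of_real_numeral of_real_power real_sqrt_pow2 zero_le_numeral)
  show "(sq z)^2 = z"
    unfolding sq_def c_def[symmetric] using c2 s2
    by (simp add: power_divide power_mult_distrib power2_eq_square algebra_simps)
  have re: "Re (sq z) = (Re c + Im c) / sqrt 2" unfolding sq_def c_def[symmetric]
    by (simp add: Re_divide_of_real)
  have im: "Im (sq z) = (Im c - Re c) / sqrt 2" unfolding sq_def c_def[symmetric]
    by (simp add: Im_divide_of_real)
  show "Re (sq z) \<ge> 0" using re ab by simp
  show "Im (sq z) \<le> 0" using im ab by (simp add: divide_nonpos_pos)
qed

lemma sqrt_quadrant_unique:
  fixes v w :: complex
  assumes "v^2 = w^2" "Re v \<ge> 0" "Im v \<le> 0" "Re w \<ge> 0" "Im w \<le> 0"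
  shows "v = w"
proof -
  have "(v - w) * (v + w) = 0" using assms(1) by (simp add: algebra_simps power2_eq_square)
  then have "v = w \<or> v = - w" by (simp add: eq_neg_iff_add_eq_0)
  then show ?thesis
  proof
    assume "v = - w"
    then have "Re v = 0" "Im v = 0" "Re w = 0" "Im w = 0" using assms by auto
    then show ?thesis by (simp add: complex_eq_iff)
  qed
qed

lemma argm_range:
  assumes "Im z \<le> 0"
  shows "- pi \<le> argm z" "argm z \<le> 0" "exp (\<i> * complex_of_real (argm z)) = exp (\<i> * complex_of_real (Arg z))"
proof -
  have "Arg z \<le> 0 \<or> Arg z = pi"
    using Arg_pos_iff[of z] Arg_eq_pi[of z] assms by force
  then show "argm z \<le> 0" unfolding argm_def by auto
  show "- pi \<le> argm z" unfolding argm_def using mpi_less_Arg[of z] by auto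
  have "exp (\<i> * complex_of_real (- pi)) = exp (\<i> * complex_of_real pi)"
    by (simp add: exp_minus)
  then show "exp (\<i> * complex_of_real (argm z)) = exp (\<i> * complex_of_real (Arg z))"
    unfolding argm_def by auto
qed

lemma sqrtm_props:
  assumes "Im z \<le> 0"
  shows "(sqrtm z)^2 = z" "Re (sqrtm z) \<ge> 0" "Im (sqrtm z) \<le> 0"
proof -
  note ar = argm_range[OF assms]
  have "(sqrtm z)^2 = complex_of_real (cmod z) * exp (\<i> * complex_of_real (argm z))"
    unfolding sqrtm_def
    by (simp add: power_mult_distrib exp_double[symmetric] flip: exp_of_nat_mult of_real_power)
  also have "\<dots> = z"
    using ar(3) Arg_eq[of z] by (cases "z = 0") auto
  finally show "(sqrtm z)^2 = z" .
  have c: "cos (argm z / 2) \<ge> 0" using ar(1,2) by (intro cos_ge_zero) auto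
  have s: "sin (argm z / 2) \<le> 0" using ar(1,2) sin_ge_zero[of "- (argm z / 2)"] by simp
  show "Re (sqrtm z) \<ge> 0" unfolding sqrtm_def using c by (simp add: Re_exp)
  show "Im (sqrtm z) \<le> 0" unfolding sqrtm_def using s by (simp add: Im_exp mult_nonneg_nonpos)
qed

lemma sqrtm_sq: "Im z \<le> 0 \<Longrightarrow> sqrtm z = sq z"
  using sqrtm_props sq_props sqrt_quadrant_unique by metis

lemma isCont_csqrt0: "isCont csqrt 0"
proof -
  have "((\<lambda>w. csqrt w) \<longlongrightarrow> 0) (at 0)"
  proof (rule tendsto_norm_zero_cancel)
    have "((\<lambda>w::complex. sqrt (norm w)) \<longlongrightarrow> sqrt (norm (0::complex))) (at 0)"
      by (intro tendsto_intros)
    then show "((\<lambda>w. norm (csqrt w)) \<longlongrightarrow> 0) (at 0)" by simp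
  qed
  then show ?thesis unfolding isCont_def by simp
qed

lemma continuous_on_sq: "continuous_on {z. Im z \<le> 0} sq"
proof -
  have "isCont csqrt (\<i> * z)" if "Im z \<le> 0" for z
  proof (cases "z = 0")
    case True then show ?thesis using isCont_csqrt0 by simp
  next
    case False
    have "\<i> * z \<notin> \<real>\<^sub>\<le>\<^sub>0"
    proof
      assume "\<i> * z \<in> \<real>\<^sub>\<le>\<^sub>0"
      then have "Im (\<i> * z) = 0" "Re (\<i> * z) \<le> 0" by (auto simp: complex_nonpos_Reals_iff)
      then show False using that False by (simp add: complex_eq_iff)
    qed
    then show ?thesis by (rule continuous_at_csqrt)
  qed
  then have "isCont (\<lambda>z. csqrt (\<i> * z)) z" if "Im z \<le> 0" for z
    using that by (intro isCont_o2[where f="\<lambda>z. \<i> * z" and g=csqrt]) auto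
  then have "continuous_on {z. Im z \<le> 0} (\<lambda>z. csqrt (\<i> * z))"
    by (intro continuous_at_imp_continuous_on) auto
  then show ?thesis unfolding sq_def by (intro continuous_intros) auto
qed

lemma holomorphic_sq: "sq holomorphic_on {z. Im z < 0}"
proof -
  have "(\<lambda>z. csqrt (\<i> * z)) holomorphic_on {z. Im z < 0}"
  proof (rule holomorphic_on_compose_gen[unfolded o_def, where g=csqrt and t="- \<real>\<^sub>\<le>\<^sub>0"])
    show "(*) \<i> holomorphic_on {z. Im z < 0}" by (intro holomorphic_intros)
    show "csqrt holomorphic_on - \<real>\<^sub>\<le>\<^sub>0" by (rule holomorphic_on_csqrt)
    show "(*) \<i> ` {z. Im z < 0} \<subseteq> - \<real>\<^sub>\<le>\<^sub>0"
      by (auto simp: complex_nonpos_Reals_iff)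
  qed
  from holomorphic_on_mult[OF this holomorphic_on_const[of "(1 - \<i>) / complex_of_real (sqrt 2)"]]
  show ?thesis unfolding sq_def by (simp add: times_divide_eq_right)
qed

lemma Phi_prim:
  obtains G :: "complex \<Rightarrow> complex" where "\<And>x. (G has_field_derivative exp (- (x^2) / 2)) (at x)"
    "\<And>w. Phi w = 1/2 + (1 / complex_of_real (sqrt (2*pi))) * (G w - G 0)"
proof -
  obtain G :: "complex \<Rightarrow> complex" where G: "\<And>x. x \<in> UNIV \<Longrightarrow> (G has_field_derivative exp (- (x^2) / 2)) (at x within UNIV)"
    by (rule holomorphic_convex_primitive'[of UNIV "\<lambda>x::complex. exp (- (x^2) / 2)"])
       (auto intro!: holomorphic_intros)
  have "contour_integral (linepath 0 w) (\<lambda>x. exp (- (x^2) / 2)) = G w - G 0" for w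
    using contour_integral_primitive[OF G, of "linepath 0 w"]
    by (intro contour_integral_unique) auto
  then show ?thesis using G that unfolding Phi_def by auto
qed

lemma Phi_deriv: "(Phi has_field_derivative exp (- (w^2) / 2) / complex_of_real (sqrt (2*pi))) (at w)"
proof -
  obtain G :: "complex \<Rightarrow> complex" where G: "\<And>x. (G has_field_derivative exp (- (x^2) / 2)) (at x)"
    "\<And>w. Phi w = 1/2 + (1 / complex_of_real (sqrt (2*pi))) * (G w - G 0)"
    using Phi_prim by metis
  have "((\<lambda>w. 1/2 + (1 / complex_of_real (sqrt (2*pi))) * (G w - G 0)) has_field_derivative
        (1 / complex_of_real (sqrt (2*pi))) * exp (- (w^2) / 2)) (at w)"
    by (auto intro!: derivative_eq_intros G(1))
  moreover have "Phi = (\<lambda>w. 1/2 + (1 / complex_of_real (sqrt (2*pi))) * (G w - G 0))"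
    using G(2) by auto
  ultimately show ?thesis by (simp add: field_simps)
qed

lemma continuous_Phi: "continuous_on S Phi"
  using Phi_deriv by (meson DERIV_isCont continuous_at_imp_continuous_on)

lemma norm_exp_le1:
  fixes w :: complex assumes "Re w \<ge> 0" shows "norm (exp (- w)) \<le> 1"
  using assms by simp

lemma prim_bound:
  fixes G :: "complex \<Rightarrow> complex"
  assumes G: "\<And>x. (G has_field_derivative exp (- (x^2) / 2)) (at x)"
    and w: "Re (w^2) \<ge> 0"
  shows "norm (G w - G 0) \<le> 4"
proof (cases "w = 0")
  case True then show ?thesis by simp
next
  case False
  define r where "r = norm w"
  have r0: "r > 0" using False r_def by simp
  define u where "u = w / complex_of_real r"
  have nu: "norm u = 1" using r0 unfolding u_def r_def by (simp add: norm_divide)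
  have u0: "u \<noteq> 0" using nu by auto
  have wu: "w = complex_of_real r * u" using r0 unfolding u_def by simp
  have reu: "Re (u^2) \<ge> 0"
  proof -
    have "u^2 = w^2 / complex_of_real (r^2)" unfolding u_def by (simp add: power_divide)
    then have "Re (u^2) = Re (w^2) / r^2" by (simp add: Re_divide_of_real)
    then show ?thesis using w by simp
  qed
  define E where "E = (\<lambda>t::real. exp (- ((complex_of_real t * u)^2) / 2))"
  have nE: "norm (E t) \<le> 1" for t
  proof -
    have "Re ((complex_of_real t * u)^2 / 2) = t^2 * Re (u^2) / 2"
      by (simp add: power_mult_distrib)
    also have "\<dots> \<ge> 0" using reu by simp
    finally show ?thesis unfolding E_def
      using norm_exp_le1[of "(complex_of_real t * u)^2 / 2"] by simp
  qed
  define h where "h = (\<lambda>t::real. G (complex_of_real t * u))"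
  have hd: "(h has_vector_derivative E t * u) (at t)" for t
  proof -
    have "((\<lambda>x. G (x * u)) has_field_derivative exp (- ((complex_of_real t * u)^2) / 2) * u) (at (complex_of_real t))"
      by (rule DERIV_chain2[OF G]) (auto intro!: derivative_eq_intros)
    from has_vector_derivative_real_field[OF this]
    show ?thesis unfolding h_def E_def by simp
  qed
  have b01: "norm (h b - h 0) \<le> b" if "0 < b" "b \<le> 1" for b
  proof -
    have "norm (h b - h 0) \<le> b - 0"
    proof (rule differentiable_bound_general[where f'="\<lambda>t. E t * u" and \<phi>'="\<lambda>_. 1"])
      show "continuous_on {0..b} h" using hd
        by (meson has_vector_derivative_continuous continuous_at_imp_continuous_on)
      show "continuous_on {0..b} (\<lambda>t::real. t)" by (intro continuous_intros)
      show "\<And>x. 0 < x \<Longrightarrow> x < b \<Longrightarrow> (h has_vector_derivative E x * u) (at x)" using hd by auto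
      show "\<And>x. 0 < x \<Longrightarrow> x < b \<Longrightarrow> ((\<lambda>t::real. t) has_vector_derivative 1) (at x)"
        by (rule has_vector_derivative_id)
      show "\<And>x. 0 < x \<Longrightarrow> x < b \<Longrightarrow> norm (E x * u) \<le> 1" using nE nu by (simp add: norm_mult)
    qed (use that in auto)
    then show ?thesis by simp
  qed
  show ?thesis
  proof (cases "r \<le> 1")
    case True
    then have "norm (h r - h 0) \<le> 1" using b01[OF r0] by linarith
    then show ?thesis unfolding h_def wu by simp
  next
    case False
    define k where "k = (\<lambda>t::real. h t + E t / (complex_of_real t * u))"
    have kd: "(k has_vector_derivative - E t / (complex_of_real t ^2 * u)) (at t)" if "t > 0" for t
    proof -
      have "((\<lambda>x. G (x * u) + exp (- ((x * u)^2) / 2) / (x * u)) has_field_derivative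
              - E t / (complex_of_real t ^2 * u)) (at (complex_of_real t))"
      proof -
        have "((\<lambda>x. G (x * u) + exp (- ((x * u)^2) / 2) / (x * u)) has_field_derivative
              exp (- ((complex_of_real t * u)^2) / 2) * u +
              ((exp (- ((complex_of_real t * u)^2) / 2) * (- (2 * (complex_of_real t * u) * u) / 2)) * (complex_of_real t * u)
               - exp (- ((complex_of_real t * u)^2) / 2) * u) / (complex_of_real t * u)^2) (at (complex_of_real t))"
          using that u0
          by (auto intro!: derivative_eq_intros DERIV_chain2[OF G] simp: power2_eq_square)
        moreover have "exp (- ((complex_of_real t * u)^2) / 2) * u +
              ((exp (- ((complex_of_real t * u)^2) / 2) * (- (2 * (complex_of_real t * u) * u) / 2)) * (complex_of_real t * u)
               - exp (- ((complex_of_real t * u)^2) / 2) * u) / (complex_of_real t * u)^2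
              = - E t / (complex_of_real t ^2 * u)"
          using that u0 unfolding E_def by (simp add: field_simps power2_eq_square)
        ultimately show ?thesis by simp
      qed
      from has_vector_derivative_real_field[OF this]
      show ?thesis unfolding k_def h_def E_def by simp
    qed
    have "norm (k r - k 1) \<le> (- 1 / r) - (- 1 / 1)"
    proof (rule differentiable_bound_general[where f'="\<lambda>t. - E t / (complex_of_real t ^2 * u)" and \<phi>'="\<lambda>t. 1 / t^2"])
      show "continuous_on {1..r} k" using kd
        by (meson atLeastAtMost_iff continuous_at_imp_continuous_on has_vector_derivative_continuous
              less_le_trans zero_less_one)
      show "continuous_on {1..r} (\<lambda>t::real. - 1 / t)" by (intro continuous_intros) auto
      show "\<And>x. 1 < x \<Longrightarrow> x < r \<Longrightarrow> (k has_vector_derivative - E x / (complex_of_real x ^2 * u)) (at x)"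
        using kd by auto
      show "\<And>x. 1 < x \<Longrightarrow> x < r \<Longrightarrow> ((\<lambda>t::real. - 1 / t) has_vector_derivative 1 / x^2) (at x)"
        by (auto intro!: derivative_eq_intros simp flip: has_real_derivative_iff_has_vector_derivative
                 simp: power2_eq_square)
      show "\<And>x. 1 < x \<Longrightarrow> x < r \<Longrightarrow> norm (- E x / (complex_of_real x ^2 * u)) \<le> 1 / x^2"
        using nE nu by (simp add: norm_divide norm_mult norm_power divide_right_mono)
    qed (use False in auto)
    also have "\<dots> \<le> 1" using r0 by simp
    finally have k1: "norm (k r - k 1) \<le> 1" .
    have "h r - h 1 = (k r - k 1) - E r / (complex_of_real r * u) + E 1 / u"
      unfolding k_def by simp
    also have "norm \<dots> \<le> norm (k r - k 1) + norm (E r / (complex_of_real r * u)) + norm (E 1 / u)"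
      by (rule order_trans[OF norm_triangle_ineq[of "k r - k 1 - E r / (complex_of_real r * u)"]])
         (simp add: norm_triangle_ineq4)
    also have "\<dots> \<le> 1 + 1 + 1"
    proof -
      have "norm (E r / (complex_of_real r * u)) \<le> 1"
        using nE[of r] nu False by (simp add: norm_divide norm_mult divide_le_eq)
      moreover have "norm (E 1 / u) \<le> 1" using nE[of 1] nu by (simp add: norm_divide)
      ultimately show ?thesis using k1 by linarith
    qed
    finally have "norm (h r - h 1) \<le> 3" by simp
    moreover have "norm (h 1 - h 0) \<le> 1" using b01[of 1] by simp
    ultimately have "norm (h r - h 0) \<le> 4"
      using norm_triangle_ineq[of "h r - h 1" "h 1 - h 0"] by simp
    then show ?thesis unfolding h_def wu by simp
  qed
qed

lemma Phi_bound:
  assumes "Re (w^2) \<ge> 0" shows "norm (Phi w) \<le> 3"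
proof -
  obtain G :: "complex \<Rightarrow> complex" where G: "\<And>x. (G has_field_derivative exp (- (x^2) / 2)) (at x)"
    "\<And>w. Phi w = 1/2 + (1 / complex_of_real (sqrt (2*pi))) * (G w - G 0)"
    using Phi_prim by metis
  have s: "sqrt (2*pi) \<ge> 2"
    using pi_gt3 by (simp add: real_le_rsqrt)
  have "norm (Phi w) \<le> norm (1/2 :: complex) + norm ((1 / complex_of_real (sqrt (2*pi))) * (G w - G 0))"
    unfolding G(2) by (rule norm_triangle_ineq)
  also have "\<dots> = 1/2 + norm (G w - G 0) / sqrt (2*pi)"
    by (simp add: norm_mult norm_divide)
  also have "\<dots> \<le> 1/2 + 4 / 2"
    using prim_bound[OF G(1) assms] s
    by (intro add_left_mono frac_le) auto
  finally show ?thesis by simp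
qed

definition phi :: "complex \<Rightarrow> complex" where
  "phi u = exp (- (u^2) / 2) / complex_of_real (sqrt (2*pi))"
definition aa :: "(nat \<Rightarrow> real) \<Rightarrow> complex \<Rightarrow> nat \<Rightarrow> complex" where
  "aa mu z j = complex_of_real (mu j) * sqrtm z * omega"
definition Ec :: "complex \<Rightarrow> complex \<Rightarrow> complex" where
  "Ec c w = exp (- (omega^2 * w^2 / 2) * c)"
definition cl :: "(nat \<Rightarrow> real) \<Rightarrow> complex \<Rightarrow> nat \<Rightarrow> complex" where
  "cl mu z l = 1 + complex_of_real ((mu l)^2) * z"
definition cl2 :: "(nat \<Rightarrow> real) \<Rightarrow> complex \<Rightarrow> nat \<Rightarrow> nat \<Rightarrow> complex" where
  "cl2 mu z l m = 1 + complex_of_real ((mu l)^2) * z + complex_of_real ((mu m)^2) * z"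
definition kap :: "(nat \<Rightarrow> real) \<Rightarrow> complex \<Rightarrow> nat \<Rightarrow> complex" where
  "kap mu z l = complex_of_real (mu l) * sqrtm z /
                 (complex_of_real (sqrt (2*pi)) * omega^2 * cl mu z l)"
definition lam :: "(nat \<Rightarrow> real) \<Rightarrow> complex \<Rightarrow> nat \<Rightarrow> nat \<Rightarrow> complex" where
  "lam mu z l m = complex_of_real (mu l * mu m) * z /
                 (complex_of_real (4 * pi) * omega * cl mu z l)"
definition pairs :: "nat \<Rightarrow> (nat \<times> nat) set" where
  "pairs d = {(a, b). a \<in> {0..d} \<and> b \<in> {0..d} \<and> a \<noteq> b}"
definition HH :: "(nat \<Rightarrow> real) \<Rightarrow> nat \<Rightarrow> complex \<Rightarrow> complex \<Rightarrow> complex" where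
  "HH mu d z w = 1 / (w * omega) * PPhi mu d {} z w * exp (- (omega^2 * w^2) / 2)
     + (\<Sum>l\<in>{0..d}. kap mu z l * PPhi mu d {l} z w * (1 / w^2) * Ec (cl mu z l) w)"
definition gc :: "(nat \<Rightarrow> real) \<Rightarrow> nat \<Rightarrow> complex \<Rightarrow> complex \<Rightarrow> complex" where
  "gc mu d z w = 1 / (2 * omega) * (PPhi mu d {} z w * exp (- (omega^2 * w^2) / 2) / w^3)
     + (\<Sum>l\<in>{0..d}. kap mu z l * PPhi mu d {l} z w * (1 / w^4) * Ec (cl mu z l) w)
     - (\<Sum>(l, m)\<in>pairs d. lam mu z l m * PPhi mu d {l, m} z w * (1 / w^3) * Ec (cl2 mu z l m) w)"

lemma omega2: "omega^2 = 2 * \<i>"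
  unfolding omega_def by (simp add: power2_eq_square algebra_simps)

lemma omega_nz: "omega \<noteq> 0"
  unfolding omega_def by (simp add: complex_eq_iff)

lemma PPhi_deriv:
  "(PPhi mu d E z has_field_derivative
     (\<Sum>l\<in>{0..d} - E. aa mu z l * phi (aa mu z l * w) * PPhi mu d (insert l E) z w)) (at w)"
proof -
  have "((\<lambda>u. \<Prod>j\<in>{0..d} - E. Phi (aa mu z j * u)) has_field_derivative
     (\<Sum>l\<in>{0..d} - E. (exp (- ((aa mu z l * w)^2) / 2) / complex_of_real (sqrt (2*pi)) * aa mu z l) *
        (\<Prod>j\<in>{0..d} - E - {l}. Phi (aa mu z j * w)))) (at w)"
  proof (rule has_field_derivative_prod)
    fix j
    show "((\<lambda>u. Phi (aa mu z j * u)) has_field_derivative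
       (exp (- ((aa mu z j * w)^2) / 2) / complex_of_real (sqrt (2*pi)) * aa mu z j)) (at w)"
      by (rule DERIV_chain2[OF Phi_deriv]) (auto intro!: derivative_eq_intros)
  qed
  moreover have "{0..d} - E - {l} = {0..d} - insert l E" for l by auto
  ultimately show ?thesis unfolding PPhi_def aa_def phi_def
    by (simp add: mult_ac)
qed

context
  fixes mu :: "nat \<Rightarrow> real" and d :: nat and z :: complex
  assumes Imz: "Im z \<le> 0"
begin

lemma aa_sq: "(aa mu z l)^2 = complex_of_real ((mu l)^2) * z * omega^2"
  unfolding aa_def using sqrtm_props(1)[OF Imz] by (simp add: power_mult_distrib)

lemma ident1:
  assumes "w \<noteq> 0" "cl mu z l \<noteq> 0"
  shows "1 / (w * omega) * (aa mu z l * phi (aa mu z l * w)) * exp (- (omega^2 * w^2) / 2)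
     = kap mu z l * (1 / w^2) * Ec (cl mu z l) w * (omega^2 * w * cl mu z l)"
proof -
  have "exp (- ((aa mu z l * w)^2) / 2) * exp (- (omega^2 * w^2) / 2) = Ec (cl mu z l) w"
    unfolding Ec_def cl_def exp_add[symmetric] power_mult_distrib aa_sq
    by (simp add: algebra_simps add_divide_distrib diff_divide_distrib)
  then show ?thesis
    using assms omega_nz unfolding kap_def phi_def
    by (simp add: aa_def field_simps power2_eq_square)
qed

end

context
  fixes mu :: "nat \<Rightarrow> real" and d :: nat and z :: complex
  assumes Imz: "Im z \<le> 0"
begin

lemma sqrtm_sq_z: "sqrtm z * sqrtm z = z"
  using sqrtm_props(1)[OF Imz] by (simp add: power2_eq_square)

lemma ident2:
  assumes "w \<noteq> 0" "cl mu z l \<noteq> 0"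
  shows "kap mu z l * (aa mu z m * phi (aa mu z m * w)) * (1 / w^2) * Ec (cl mu z l) w
     = 2 * w * lam mu z l m * (1 / w^3) * Ec (cl2 mu z l m) w"
proof -
  have e: "exp (- ((aa mu z m * w)^2) / 2) * Ec (cl mu z l) w = Ec (cl2 mu z l m) w"
    unfolding Ec_def cl_def cl2_def exp_add[symmetric] power_mult_distrib aa_sq[OF Imz]
    by (simp add: algebra_simps add_divide_distrib diff_divide_distrib)
  have s: "complex_of_real (sqrt (2*pi)) * complex_of_real (sqrt (2*pi)) = 2 * complex_of_real pi"
    by (simp flip: of_real_mult) (simp add: of_real_mult)
  have "kap mu z l * (aa mu z m * phi (aa mu z m * w)) * (1 / w^2) * Ec (cl mu z l) w
      = complex_of_real (mu l) * complex_of_real (mu m) * (sqrtm z * sqrtm z) * omega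
          / (complex_of_real (sqrt (2*pi)) * complex_of_real (sqrt (2*pi)) * omega^2 * cl mu z l)
          * (1 / w^2) * (exp (- ((aa mu z m * w)^2) / 2) * Ec (cl mu z l) w)"
    unfolding kap_def phi_def by (simp add: aa_def field_simps)
  also have "\<dots> = 2 * w * lam mu z l m * (1 / w^3) * Ec (cl2 mu z l m) w"
    unfolding e s sqrtm_sq_z lam_def using assms omega_nz
    by (simp add: field_simps power2_eq_square power3_eq_cube)
  finally show ?thesis .
qed

lemma Ec_deriv: "(Ec c has_field_derivative Ec c w * (- (omega^2 * w) * c)) (at w)"
  unfolding Ec_def by (auto intro!: derivative_eq_intros simp: power2_eq_square)

lemma dH1:
  assumes w: "w \<noteq> 0" and clnz: "\<forall>l\<in>{0..d}. cl mu z l \<noteq> 0"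
  shows "((\<lambda>w. 1 / (w * omega) * PPhi mu d {} z w * exp (- (omega^2 * w^2) / 2)) has_field_derivative
     - (PPhi mu d {} z w * exp (- (omega^2 * w^2) / 2) * omega)
     - 2 * w * (1 / (2 * omega) * (PPhi mu d {} z w * exp (- (omega^2 * w^2) / 2) / w^3))
     + (\<Sum>l\<in>{0..d}. kap mu z l * PPhi mu d {l} z w * (1 / w^2) * Ec (cl mu z l) w * (omega^2 * w * cl mu z l))) (at w)"
proof -
  define P where "P = PPhi mu d {} z w"
  define P' where "P' = (\<Sum>l\<in>{0..d} - {}. aa mu z l * phi (aa mu z l * w) * PPhi mu d (insert l {}) z w)"
  define E where "E = exp (- (omega^2 * w^2) / 2)"
  have "((\<lambda>w. 1 / (w * omega) * PPhi mu d {} z w * exp (- (omega^2 * w^2) / 2)) has_field_derivative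
      (- 1 / (w^2 * omega)) * P * E + 1 / (w * omega) * P' * E + 1 / (w * omega) * P * (E * (- (omega^2 * w)))) (at w)"
    unfolding P_def P'_def E_def using w omega_nz
    by (auto intro!: derivative_eq_intros PPhi_deriv simp: field_simps power2_eq_square)
  moreover have "1 / (w * omega) * P' * E =
     (\<Sum>l\<in>{0..d}. kap mu z l * PPhi mu d {l} z w * (1 / w^2) * Ec (cl mu z l) w * (omega^2 * w * cl mu z l))"
  proof -
    have "1 / (w * omega) * P' * E = (\<Sum>l\<in>{0..d}. (1 / (w * omega) * (aa mu z l * phi (aa mu z l * w)) * E) * PPhi mu d {l} z w)"
      unfolding P'_def by (simp add: sum_distrib_left sum_distrib_right mult_ac)
    also have "\<dots> = (\<Sum>l\<in>{0..d}. kap mu z l * PPhi mu d {l} z w * (1 / w^2) * Ec (cl mu z l) w * (omega^2 * w * cl mu z l))"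
    proof (rule sum.cong[OF refl])
      fix l assume "l \<in> {0..d}"
      then show "(1 / (w * omega) * (aa mu z l * phi (aa mu z l * w)) * E) * PPhi mu d {l} z w =
          kap mu z l * PPhi mu d {l} z w * (1 / w^2) * Ec (cl mu z l) w * (omega^2 * w * cl mu z l)"
        using ident1[where mu=mu and l=l, OF Imz w] clnz unfolding E_def by (simp add: mult_ac)
    qed
    finally show ?thesis .
  qed
  moreover have "(- 1 / (w^2 * omega)) * P * E = - 2 * w * (1 / (2 * omega) * (P * E / w^3))"
    using w omega_nz by (simp add: field_simps power2_eq_square power3_eq_cube)
  moreover have "1 / (w * omega) * P * (E * (- (omega^2 * w))) = - (P * E * omega)"
    using w omega_nz by (simp add: field_simps power2_eq_square)
  ultimately show ?thesis unfolding P_def E_def by (simp add: algebra_simps)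
qed

lemma dH2:
  assumes w: "w \<noteq> 0" and clnz: "cl mu z l \<noteq> 0"
  shows "((\<lambda>w. kap mu z l * PPhi mu d {l} z w * (1 / w^2) * Ec (cl mu z l) w) has_field_derivative
     (\<Sum>m\<in>{0..d} - {l}. 2 * w * (lam mu z l m * PPhi mu d {l, m} z w * (1 / w^3) * Ec (cl2 mu z l m) w))
     - 2 * w * (kap mu z l * PPhi mu d {l} z w * (1 / w^4) * Ec (cl mu z l) w)
     - kap mu z l * PPhi mu d {l} z w * (1 / w^2) * Ec (cl mu z l) w * (omega^2 * w * cl mu z l)) (at w)"
proof -
  define Q where "Q = PPhi mu d {l} z w"
  define Q' where "Q' = (\<Sum>m\<in>{0..d} - {l}. aa mu z m * phi (aa mu z m * w) * PPhi mu d (insert m {l}) z w)"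
  define E where "E = Ec (cl mu z l) w"
  define k where "k = kap mu z l"
  have "((\<lambda>w. kap mu z l * PPhi mu d {l} z w * (1 / w^2) * Ec (cl mu z l) w) has_field_derivative
      k * Q' * (1 / w^2) * E + k * Q * (- 2 / w^3) * E + k * Q * (1 / w^2) * (E * (- (omega^2 * w) * cl mu z l))) (at w)"
    unfolding Q_def Q'_def E_def k_def using w
    by (auto intro!: derivative_eq_intros PPhi_deriv Ec_deriv simp: field_simps power2_eq_square power3_eq_cube)
  moreover have "k * Q' * (1 / w^2) * E =
     (\<Sum>m\<in>{0..d} - {l}. 2 * w * (lam mu z l m * PPhi mu d {l, m} z w * (1 / w^3) * Ec (cl2 mu z l m) w))"
  proof -
    have "k * Q' * (1 / w^2) * E = (\<Sum>m\<in>{0..d} - {l}. (k * (aa mu z m * phi (aa mu z m * w)) * (1 / w^2) * E) * PPhi mu d {l, m} z w)"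
      unfolding Q'_def by (simp add: sum_distrib_left sum_distrib_right mult_ac insert_commute)
    also have "\<dots> = (\<Sum>m\<in>{0..d} - {l}. 2 * w * (lam mu z l m * PPhi mu d {l, m} z w * (1 / w^3) * Ec (cl2 mu z l m) w))"
    proof (rule sum.cong[OF refl])
      fix m
      show "(k * (aa mu z m * phi (aa mu z m * w)) * (1 / w^2) * E) * PPhi mu d {l, m} z w =
          2 * w * (lam mu z l m * PPhi mu d {l, m} z w * (1 / w^3) * Ec (cl2 mu z l m) w)"
        using ident2[OF w clnz, of m] unfolding E_def k_def by (simp add: mult_ac)
    qed
    finally show ?thesis .
  qed
  moreover have "k * Q * (- 2 / w^3) * E = - 2 * w * (k * Q * (1 / w^4) * E)"
    using w by (simp add: field_simps power2_eq_square power3_eq_cube power4_eq_xxxx)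
  moreover have "k * Q * (1 / w^2) * (E * (- (omega^2 * w) * cl mu z l)) = - (k * Q * (1 / w^2) * E * (omega^2 * w * cl mu z l))"
    by (simp add: algebra_simps)
  ultimately show ?thesis unfolding Q_def E_def k_def by (simp add: algebra_simps)
qed

end

lemma pairs_Sigma: "pairs d = Sigma {0..d} (\<lambda>l. {0..d} - {l})"
  unfolding pairs_def by auto

context
  fixes mu :: "nat \<Rightarrow> real" and d :: nat and z :: complex
  assumes Imz: "Im z \<le> 0"
begin

lemma dHH:
  assumes w: "w \<noteq> 0" and clnz: "\<forall>l\<in>{0..d}. cl mu z l \<noteq> 0"
  shows "(HH mu d z has_field_derivative
     - (PPhi mu d {} z w * exp (- (omega^2 * w^2) / 2) * omega) - 2 * w * gc mu d z w) (at w)"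
proof -
  define X where "X = (\<lambda>l. kap mu z l * PPhi mu d {l} z w * (1 / w^2) * Ec (cl mu z l) w * (omega^2 * w * cl mu z l))"
  define Y where "Y = (\<lambda>l m. lam mu z l m * PPhi mu d {l, m} z w * (1 / w^3) * Ec (cl2 mu z l m) w)"
  define Z where "Z = (\<lambda>l. kap mu z l * PPhi mu d {l} z w * (1 / w^4) * Ec (cl mu z l) w)"
  define T where "T = 1 / (2 * omega) * (PPhi mu d {} z w * exp (- (omega^2 * w^2) / 2) / w^3)"
  define F where "F = PPhi mu d {} z w * exp (- (omega^2 * w^2) / 2) * omega"
  have d1: "(HH mu d z has_field_derivative (- F - 2 * w * T + sum X {0..d})
      + (\<Sum>l\<in>{0..d}. (\<Sum>m\<in>{0..d} - {l}. 2 * w * Y l m) - 2 * w * Z l - X l)) (at w)"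
    unfolding HH_def[abs_def] X_def Y_def Z_def T_def F_def
    by (intro DERIV_add DERIV_sum dH1[OF Imz w clnz] dH2[OF Imz w]) (use clnz in auto)
  have e1: "(- F - 2 * w * T + sum X {0..d})
      + (\<Sum>l\<in>{0..d}. (\<Sum>m\<in>{0..d} - {l}. 2 * w * Y l m) - 2 * w * Z l - X l)
      = - F - 2 * w * (T + sum Z {0..d} - (\<Sum>(l, m)\<in>pairs d. Y l m))"
  proof -
    have "(\<Sum>l\<in>{0..d}. (\<Sum>m\<in>{0..d} - {l}. 2 * w * Y l m) - 2 * w * Z l - X l)
        = 2 * w * (\<Sum>l\<in>{0..d}. \<Sum>m\<in>{0..d} - {l}. Y l m) - 2 * w * sum Z {0..d} - sum X {0..d}"
      by (simp add: sum_subtractf sum_distrib_left)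
    also have "(\<Sum>l\<in>{0..d}. \<Sum>m\<in>{0..d} - {l}. Y l m) = (\<Sum>(l, m)\<in>pairs d. Y l m)"
      unfolding pairs_Sigma by (rule sum.Sigma) auto
    finally show ?thesis by (simp add: algebra_simps)
  qed
  have e2: "T + sum Z {0..d} - (\<Sum>(l, m)\<in>pairs d. Y l m) = gc mu d z w"
    unfolding gc_def T_def Z_def Y_def by simp
  from d1[unfolded e1 e2] show ?thesis unfolding F_def .
qed

end

lemma tail_lemma:
  fixes f :: "real \<Rightarrow> complex"
  assumes a: "a > 0" and e: "e < -1" and cont: "continuous_on {a..} f"
    and bnd: "\<And>x. x \<ge> a \<Longrightarrow> norm (f x) \<le> C * x powr e"
  shows "f absolutely_integrable_on {a..}"
    "norm (integral {a..} f) \<le> C * (- (a powr (e+1)) / (e+1))"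
proof -
  have g: "((\<lambda>x. C * x powr e) has_integral C * (- (a powr (e+1)) / (e+1))) {a..}"
    using has_integral_powr_to_inf[OF e a] by (rule has_integral_mult_right)
  then have gi: "(\<lambda>x. C * x powr e) integrable_on {a..}" by blast
  have meas: "f \<in> borel_measurable (lebesgue_on {a..})"
    by (rule continuous_imp_measurable_on_sets_lebesgue[OF cont]) auto
  show ai: "f absolutely_integrable_on {a..}"
    by (rule measurable_bounded_by_integrable_imp_absolutely_integrable[OF meas _ gi]) (use bnd in auto)
  have "norm (integral {a..} f) \<le> integral {a..} (\<lambda>x. C * x powr e)"
    by (rule integral_norm_bound_integral[OF absolutely_integrable_on_def[THEN iffD1, OF ai, THEN conjunct1] gi])
       (use bnd in auto)
  then show "norm (integral {a..} f) \<le> C * (- (a powr (e+1)) / (e+1))"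
    using integral_unique[OF g] by simp
qed

lemma tail_split:
  fixes f :: "real \<Rightarrow> complex"
  assumes "f integrable_on {a..}" "f integrable_on {b..}" "a \<le> b"
  shows "integral {a..b} f = integral {a..} f - integral {b..} f"
proof -
  have i1: "f integrable_on {a..b}" by (rule integrable_on_subinterval[OF assms(1)]) auto
  have "{a..b} \<union> {b..} = {a..}" using assms(3) by auto
  moreover have "{a..b} \<inter> {b..} = {b}" using assms(3) by auto
  ultimately have "integral {a..} f = integral {a..b} f + integral {b..} f"
    using integral_Un[OF i1 assms(2), of] by (metis negligible_sing)
  then show ?thesis by simp
qed

definition G1x :: "(nat \<Rightarrow> real) \<Rightarrow> nat \<Rightarrow> complex \<Rightarrow> real \<Rightarrow> complex" where
  "G1x mu d z x = PPhi mu d {} z (complex_of_real (sqrt x)) * exp (- (omega^2 * complex_of_real x) / 2)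
              / complex_of_real (x powr (3/2))"
definition G2x :: "(nat \<Rightarrow> real) \<Rightarrow> nat \<Rightarrow> complex \<Rightarrow> nat \<Rightarrow> real \<Rightarrow> complex" where
  "G2x mu d z l x = PPhi mu d {l} z (complex_of_real (sqrt x)) * (1 / complex_of_real (x^2))
              * exp (- (omega^2 * complex_of_real x / 2) * (1 + complex_of_real ((mu l)^2) * z))"
definition G3x :: "(nat \<Rightarrow> real) \<Rightarrow> nat \<Rightarrow> complex \<Rightarrow> nat \<Rightarrow> nat \<Rightarrow> real \<Rightarrow> complex" where
  "G3x mu d z l1 l2 x = PPhi mu d {l1, l2} z (complex_of_real (sqrt x)) * (1 / complex_of_real (x powr (3/2)))
              * exp (- (omega^2 * complex_of_real x / 2)
                     * (1 + complex_of_real ((mu l1)^2) * z + complex_of_real ((mu l2)^2) * z))"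
definition gx :: "(nat \<Rightarrow> real) \<Rightarrow> nat \<Rightarrow> complex \<Rightarrow> real \<Rightarrow> complex" where
  "gx mu d z x = 1 / (2 * omega) * G1x mu d z x + (\<Sum>l\<in>{0..d}. kap mu z l * G2x mu d z l x)
      - (\<Sum>(l1, l2)\<in>pairs d. lam mu z l1 l2 * G3x mu d z l1 l2 x)"

lemma continuous_PPhi: "continuous_on S (PPhi mu d E z)"
  using PPhi_deriv by (meson DERIV_isCont continuous_at_imp_continuous_on)

lemma continuous_on_PPhi_comp [continuous_intros]:
  "continuous_on S f \<Longrightarrow> continuous_on S (\<lambda>x. PPhi mu d E z (f x))"
  by (rule continuous_on_compose2[OF continuous_PPhi[of UNIV]]) auto

lemma cont_G1x: "continuous_on {a..} (G1x mu d z)" if "a > 0"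
  unfolding G1x_def using that by (intro continuous_intros) auto
lemma cont_G2x: "continuous_on {a..} (G2x mu d z l)" if "a > 0"
  unfolding G2x_def using that by (intro continuous_intros) auto
lemma cont_G3x: "continuous_on {a..} (G3x mu d z l1 l2)" if "a > 0"
  unfolding G3x_def using that by (intro continuous_intros) auto
lemma cont_gx: "continuous_on {a..} (gx mu d z)" if "a > 0"
proof -
  have "continuous_on {a..} (\<lambda>x. \<Sum>(l1, l2)\<in>pairs d. lam mu z l1 l2 * G3x mu d z l1 l2 x)"
    by (rule continuous_on_sum) (clarsimp, intro continuous_on_mult continuous_on_const cont_G3x that)
  moreover have "continuous_on {a..} (\<lambda>x. \<Sum>l\<in>{0..d}. kap mu z l * G2x mu d z l x)"
    by (rule continuous_on_sum) (intro continuous_on_mult continuous_on_const cont_G2x that)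
  ultimately show ?thesis unfolding gx_def
    by (intro continuous_on_diff continuous_on_add continuous_on_mult continuous_on_const cont_G1x that)
qed

context
  fixes mu :: "nat \<Rightarrow> real" and d :: nat and z :: complex
  assumes Imz: "Im z \<le> 0"
begin

lemma PPhi_bound: "norm (PPhi mu d E z (complex_of_real t)) \<le> 3^(d+1)"
proof -
  have "norm (PPhi mu d E z (complex_of_real t)) = (\<Prod>j\<in>{0..d} - E. norm (Phi (aa mu z j * complex_of_real t)))"
    unfolding PPhi_def aa_def by (simp add: prod_norm)
  also have "\<dots> \<le> (\<Prod>j\<in>{0..d} - E. 3)"
  proof (rule prod_mono)
    fix j assume "j \<in> {0..d} - E"
    have "(aa mu z j * complex_of_real t)^2 = complex_of_real ((mu j)^2 * t^2) * z * (2 * \<i>)"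
      unfolding power_mult_distrib aa_sq[OF Imz] omega2 by simp
    then have "Re ((aa mu z j * complex_of_real t)^2) = - 2 * ((mu j)^2 * t^2) * Im z" by simp
    also have "\<dots> \<ge> 0" using Imz by (simp add: mult_nonneg_nonpos2)
    finally show "0 \<le> norm (Phi (aa mu z j * complex_of_real t)) \<and> norm (Phi (aa mu z j * complex_of_real t)) \<le> 3"
      using Phi_bound by auto
  qed
  also have "\<dots> = 3 ^ card ({0..d} - E)" by simp
  also have "\<dots> \<le> 3 ^ (d+1)"
  proof (rule power_increasing)
    have "card ({0..d} - E) \<le> card {0..d}" by (rule card_mono) auto
    then show "card ({0..d} - E) \<le> d + 1" by simp
  qed auto
  finally show ?thesis .
qed

lemma exp_bound1: "norm (exp (- (omega^2 * complex_of_real x) / 2)) = 1"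
  by (simp add: omega2)

lemma exp_bound2:
  assumes "x \<ge> 0" "Im c \<le> 0"
  shows "norm (exp (- (omega^2 * complex_of_real x / 2) * c)) \<le> 1"
proof -
  have "Re (- (omega^2 * complex_of_real x / 2) * c) = x * Im c" by (simp add: omega2)
  also have "\<dots> \<le> 0" using assms by (simp add: mult_nonneg_nonpos)
  finally show ?thesis by simp
qed

lemma Im_cl: "Im (1 + complex_of_real ((mu l)^2) * z) \<le> 0"
  using Imz by (simp add: mult_nonneg_nonpos)
lemma Im_cl2: "Im (1 + complex_of_real ((mu l1)^2) * z + complex_of_real ((mu l2)^2) * z) \<le> 0"
  using Imz by (simp add: mult_nonneg_nonpos add_nonpos_nonpos)

lemma G1x_bound: "x > 0 \<Longrightarrow> norm (G1x mu d z x) \<le> 3^(d+1) * x powr (-3/2)"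
proof -
  assume x: "x > 0"
  have "norm (G1x mu d z x) = norm (PPhi mu d {} z (complex_of_real (sqrt x))) / x powr (3/2)"
    unfolding G1x_def norm_divide norm_mult exp_bound1 using x by simp
  also have "\<dots> \<le> 3^(d+1) / x powr (3/2)"
    by (rule divide_right_mono[OF PPhi_bound]) simp
  also have "\<dots> = 3^(d+1) * x powr (-3/2)" using x by (simp add: powr_minus divide_simps)
  finally show ?thesis .
qed

lemma G2x_bound: "x > 0 \<Longrightarrow> norm (G2x mu d z l x) \<le> 3^(d+1) * x powr (-2)"
proof -
  assume x: "x > 0"
  have "norm (G2x mu d z l x) \<le> 3^(d+1) * (1 / x^2) * 1"
    unfolding G2x_def norm_mult
    by (intro mult_mono PPhi_bound exp_bound2 Im_cl) (use x in \<open>auto simp: norm_divide norm_power\<close>)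
  also have "\<dots> = 3^(d+1) * x powr (-2)" using x by (simp add: powr_minus powr_realpow divide_inverse)
  finally show ?thesis .
qed

lemma G3x_bound: "x > 0 \<Longrightarrow> norm (G3x mu d z l1 l2 x) \<le> 3^(d+1) * x powr (-3/2)"
proof -
  assume x: "x > 0"
  have "norm (G3x mu d z l1 l2 x) \<le> 3^(d+1) * (1 / x powr (3/2)) * 1"
    unfolding G3x_def norm_mult
    by (intro mult_mono PPhi_bound exp_bound2 Im_cl2) (use x in \<open>auto simp: norm_divide\<close>)
  also have "\<dots> = 3^(d+1) * x powr (-3/2)" using x by (simp add: powr_minus divide_simps)
  finally show ?thesis .
qed

end

lemma sq_powr32: "y > 0 \<Longrightarrow> (y^2) powr (3/2) = (y::real)^3"
proof -
  assume y: "y > 0"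
  have "(y^2) powr (3/2) = (y powr 2) powr (3/2)" using y by (simp add: powr_realpow)
  also have "\<dots> = y powr 3" by (simp add: powr_powr)
  also have "\<dots> = y^3" using y by (simp add: powr_realpow)
  finally show ?thesis .
qed

lemma gx_eq:
  assumes y: "y > 0"
  shows "gx mu d z (y^2) = gc mu d z (complex_of_real y)"
proof -
  have s: "sqrt (y^2) = y" using y by simp
  have p: "complex_of_real ((y^2) powr (3/2)) = (complex_of_real y)^3" using sq_powr32[OF y] by simp
  have G1: "G1x mu d z (y^2) = PPhi mu d {} z (complex_of_real y) * exp (- (omega^2 * (complex_of_real y)^2) / 2) / (complex_of_real y)^3"
    unfolding G1x_def s p by simp
  have G2: "G2x mu d z l (y^2) = PPhi mu d {l} z (complex_of_real y) * (1 / (complex_of_real y)^4) * Ec (cl mu z l) (complex_of_real y)" for l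
    unfolding G2x_def s Ec_def cl_def by (simp add: power_mult_distrib flip: power_mult)
  have G3: "G3x mu d z l1 l2 (y^2) = PPhi mu d {l1, l2} z (complex_of_real y) * (1 / (complex_of_real y)^3) * Ec (cl2 mu z l1 l2) (complex_of_real y)" for l1 l2
    unfolding G3x_def s p Ec_def cl2_def by simp
  show ?thesis unfolding gx_def gc_def G1 G2 G3 by (simp add: mult.assoc)
qed

context
  fixes mu :: "nat \<Rightarrow> real" and d :: nat and z :: complex
  assumes Imz: "Im z \<le> 0" and clnz: "\<forall>l\<in>{0..d}. cl mu z l \<noteq> 0"
begin

lemma main_identity:
  assumes A: "0 < A" and AB: "A \<le> B"
  shows "(Fint mu d z has_integral
           (HH mu d z (complex_of_real A) - HH mu d z (complex_of_real B) - integral {A^2..B^2} (gx mu d z))) {A..B}"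
proof -
  define D where "D = (\<lambda>y::real. - (PPhi mu d {} z (complex_of_real y) * exp (- (omega^2 * (complex_of_real y)^2) / 2) * omega)
      - 2 * complex_of_real y * gc mu d z (complex_of_real y))"
  have "(D has_integral (HH mu d z (complex_of_real B) - HH mu d z (complex_of_real A))) {A..B}"
  proof (rule fundamental_theorem_of_calculus[OF AB])
    fix y assume y: "y \<in> {A..B}"
    then have "complex_of_real y \<noteq> 0" using A by auto
    from has_vector_derivative_real_field[OF dHH[OF Imz this clnz]]
    show "((\<lambda>y. HH mu d z (complex_of_real y)) has_vector_derivative D y) (at y within {A..B})"
      unfolding D_def .
  qed
  moreover have "((\<lambda>y. (2 * y) *\<^sub>R gx mu d z (y^2)) has_integral integral {A^2..B^2} (gx mu d z)) {A..B}"
  proof (rule has_integral_substitution[where g="\<lambda>y. y^2" and c="A^2" and d="B^2"])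
    show "A \<le> B" by fact
    show "A^2 \<le> B^2" using A AB by (simp add: power_mono)
    show "(\<lambda>y. y^2) ` {A..B} \<subseteq> {A^2..B^2}" using A by (auto intro: power_mono)
    show "continuous_on {A^2..B^2} (gx mu d z)"
      by (rule continuous_on_subset[OF cont_gx[of "A^2"]]) (use A in auto)
    show "\<And>x. x \<in> {A..B} \<Longrightarrow> ((\<lambda>y. y^2) has_real_derivative 2 * x) (at x within {A..B})"
      by (auto intro!: derivative_eq_intros)
  qed
  ultimately have I: "((\<lambda>y. - D y - (2 * y) *\<^sub>R gx mu d z (y^2)) has_integral
      (- (HH mu d z (complex_of_real B) - HH mu d z (complex_of_real A)) - integral {A^2..B^2} (gx mu d z))) {A..B}"
    by (intro has_integral_diff has_integral_neg)
  have eq: "- D y - (2 * y) *\<^sub>R gx mu d z (y^2) = Fint mu d z y" if "y \<in> {A..B}" for y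
  proof -
    have "y > 0" using that A by auto
    then show ?thesis unfolding D_def Fint_def gx_eq[OF \<open>y > 0\<close>]
      by (simp add: scaleR_conv_of_real)
  qed
  have "(- (HH mu d z (complex_of_real B) - HH mu d z (complex_of_real A)) - integral {A^2..B^2} (gx mu d z))
      = HH mu d z (complex_of_real A) - HH mu d z (complex_of_real B) - integral {A^2..B^2} (gx mu d z)"
    by simp
  with has_integral_eq[OF eq I] show ?thesis by simp
qed

end

definition KG :: "(nat \<Rightarrow> real) \<Rightarrow> nat \<Rightarrow> complex \<Rightarrow> real" where
  "KG mu d z = 3^(d+1) * (norm (1 / (2 * omega)) + (\<Sum>l\<in>{0..d}. norm (kap mu z l))
                + (\<Sum>(l1, l2)\<in>pairs d. norm (lam mu z l1 l2)))"
definition KH :: "(nat \<Rightarrow> real) \<Rightarrow> nat \<Rightarrow> complex \<Rightarrow> real" where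
  "KH mu d z = 3^(d+1) * (1 / norm omega + (\<Sum>l\<in>{0..d}. norm (kap mu z l)))"
definition VV :: "(nat \<Rightarrow> real) \<Rightarrow> nat \<Rightarrow> complex \<Rightarrow> real \<Rightarrow> complex" where
  "VV mu d z A = integral {0..A} (Fint mu d z) + HH mu d z (complex_of_real A) - integral {A^2..} (gx mu d z)"

lemma finite_pairs: "finite (pairs d)"
  unfolding pairs_Sigma by auto

lemma cont_Fint: "continuous_on S (Fint mu d z)"
  unfolding Fint_def by (intro continuous_intros) auto

context
  fixes mu :: "nat \<Rightarrow> real" and d :: nat and z :: complex
  assumes Imz: "Im z \<le> 0"
begin

lemma AI1: "a > 0 \<Longrightarrow> G1x mu d z absolutely_integrable_on {a..}"
proof (rule tail_lemma(1)[of a "-3/2" _ "3^(d+1)"])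
  assume "a > 0"
  then show "continuous_on {a..} (G1x mu d z)" by (rule cont_G1x)
  show "norm (G1x mu d z x) \<le> 3^(d+1) * x powr (-3/2)" if "x \<ge> a" for x
    using G1x_bound[OF Imz] that \<open>a > 0\<close> by auto
qed auto
lemma AI2: "a > 0 \<Longrightarrow> G2x mu d z l absolutely_integrable_on {a..}"
proof (rule tail_lemma(1)[of a "-2" _ "3^(d+1)"])
  assume "a > 0"
  then show "continuous_on {a..} (G2x mu d z l)" by (rule cont_G2x)
  show "norm (G2x mu d z l x) \<le> 3^(d+1) * x powr (-2)" if "x \<ge> a" for x
    using G2x_bound[OF Imz] that \<open>a > 0\<close> by auto
qed auto
lemma AI3: "a > 0 \<Longrightarrow> G3x mu d z l1 l2 absolutely_integrable_on {a..}"
proof (rule tail_lemma(1)[of a "-3/2" _ "3^(d+1)"])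
  assume "a > 0"
  then show "continuous_on {a..} (G3x mu d z l1 l2)" by (rule cont_G3x)
  show "norm (G3x mu d z l1 l2 x) \<le> 3^(d+1) * x powr (-3/2)" if "x \<ge> a" for x
    using G3x_bound[OF Imz] that \<open>a > 0\<close> by auto
qed auto

lemma gx_integral:
  assumes a: "a > 0"
  shows "gx mu d z integrable_on {a..}"
    "integral {a..} (gx mu d z) = 1 / (2 * omega) * integral {a..} (G1x mu d z)
        + (\<Sum>l\<in>{0..d}. kap mu z l * integral {a..} (G2x mu d z l))
        - (\<Sum>(l1, l2)\<in>pairs d. lam mu z l1 l2 * integral {a..} (G3x mu d z l1 l2))"
proof -
  have i1: "G1x mu d z integrable_on {a..}" using AI1[OF a] by (simp add: absolutely_integrable_on_def)
  have i2: "G2x mu d z l integrable_on {a..}" for l using AI2[OF a] by (simp add: absolutely_integrable_on_def)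
  have i3: "G3x mu d z l1 l2 integrable_on {a..}" for l1 l2 using AI3[OF a] by (simp add: absolutely_integrable_on_def)
  have j1: "(\<lambda>x. 1 / (2 * omega) * G1x mu d z x) integrable_on {a..}"
    by (rule integrable_on_mult_right[OF i1])
  have j2: "(\<lambda>x. \<Sum>l\<in>{0..d}. kap mu z l * G2x mu d z l x) integrable_on {a..}"
    by (rule integrable_sum) (auto intro: integrable_on_mult_right[OF i2])
  have j3: "(\<lambda>x. \<Sum>p\<in>pairs d. (\<lambda>(l1, l2). lam mu z l1 l2 * G3x mu d z l1 l2 x) p) integrable_on {a..}"
    by (rule integrable_sum) (auto simp: finite_pairs split: prod.split intro: integrable_on_mult_right[OF i3])
  have gxe: "gx mu d z = (\<lambda>x. (1 / (2 * omega) * G1x mu d z x + (\<Sum>l\<in>{0..d}. kap mu z l * G2x mu d z l x))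
      - (\<Sum>p\<in>pairs d. (\<lambda>(l1, l2). lam mu z l1 l2 * G3x mu d z l1 l2 x) p))"
    unfolding gx_def by (simp add: case_prod_beta)
  show "gx mu d z integrable_on {a..}" unfolding gxe
    by (intro integrable_diff integrable_add j1 j2 j3)
  have "integral {a..} (gx mu d z) = integral {a..} (\<lambda>x. 1 / (2 * omega) * G1x mu d z x)
      + integral {a..} (\<lambda>x. \<Sum>l\<in>{0..d}. kap mu z l * G2x mu d z l x)
      - integral {a..} (\<lambda>x. \<Sum>p\<in>pairs d. (\<lambda>(l1, l2). lam mu z l1 l2 * G3x mu d z l1 l2 x) p)"
    unfolding gxe by (simp only: integral_diff[OF integrable_add[OF j1 j2] j3] integral_add[OF j1 j2])
  also have "integral {a..} (\<lambda>x. \<Sum>l\<in>{0..d}. kap mu z l * G2x mu d z l x)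
      = (\<Sum>l\<in>{0..d}. kap mu z l * integral {a..} (G2x mu d z l))"
    by (subst integral_sum) (auto intro: integrable_on_mult_right[OF i2])
  also have "integral {a..} (\<lambda>x. \<Sum>p\<in>pairs d. (\<lambda>(l1, l2). lam mu z l1 l2 * G3x mu d z l1 l2 x) p)
      = (\<Sum>(l1, l2)\<in>pairs d. lam mu z l1 l2 * integral {a..} (G3x mu d z l1 l2))"
    by (subst integral_sum) (auto simp: finite_pairs split: prod.split intro: integrable_on_mult_right[OF i3] sum.cong)
  finally show "integral {a..} (gx mu d z) = 1 / (2 * omega) * integral {a..} (G1x mu d z)
        + (\<Sum>l\<in>{0..d}. kap mu z l * integral {a..} (G2x mu d z l))
        - (\<Sum>(l1, l2)\<in>pairs d. lam mu z l1 l2 * integral {a..} (G3x mu d z l1 l2))"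
    by simp
qed

lemma gx_bound:
  assumes x: "x \<ge> 1"
  shows "norm (gx mu d z x) \<le> KG mu d z * x powr (-3/2)"
proof -
  define C where "C = (3::real)^(d+1) * x powr (-3/2)"
  have b1: "norm (G1x mu d z x) \<le> C" unfolding C_def using G1x_bound[OF Imz] x by auto
  have b2: "norm (G2x mu d z l x) \<le> C" for l
  proof -
    have "x powr (-2) \<le> x powr (-3/2)" using x by (intro powr_mono) auto
    from mult_left_mono[OF this, of "3^(d+1)"]
    have "(3::real)^(d+1) * x powr (-2) \<le> 3^(d+1) * x powr (-3/2)" by simp
    moreover have "norm (G2x mu d z l x) \<le> 3^(d+1) * x powr (-2)"
      using G2x_bound[OF Imz, where mu=mu and d=d and l=l and x=x] x by simp
    ultimately show ?thesis unfolding C_def by (rule order_trans[rotated])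
  qed
  have b3: "norm (G3x mu d z l1 l2 x) \<le> C" for l1 l2 unfolding C_def using G3x_bound[OF Imz] x by auto
  have "norm (gx mu d z x) \<le> norm (1 / (2 * omega) * G1x mu d z x) + norm (\<Sum>l\<in>{0..d}. kap mu z l * G2x mu d z l x)
      + norm (\<Sum>(l1, l2)\<in>pairs d. lam mu z l1 l2 * G3x mu d z l1 l2 x)"
    unfolding gx_def by (rule order_trans[OF norm_triangle_ineq4 add_right_mono[OF norm_triangle_ineq]])
  also have "\<dots> \<le> norm (1 / (2 * omega)) * C + (\<Sum>l\<in>{0..d}. norm (kap mu z l) * C)
      + (\<Sum>(l1, l2)\<in>pairs d. norm (lam mu z l1 l2) * C)"
  proof (intro add_mono)
    show "norm (1 / (2 * omega) * G1x mu d z x) \<le> norm (1 / (2 * omega)) * C"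
      unfolding norm_mult by (intro mult_left_mono b1) auto
    show "norm (\<Sum>l\<in>{0..d}. kap mu z l * G2x mu d z l x) \<le> (\<Sum>l\<in>{0..d}. norm (kap mu z l) * C)"
      by (rule order_trans[OF norm_sum sum_mono]) (auto simp: norm_mult intro!: mult_left_mono b2)
    show "norm (\<Sum>(l1, l2)\<in>pairs d. lam mu z l1 l2 * G3x mu d z l1 l2 x) \<le> (\<Sum>(l1, l2)\<in>pairs d. norm (lam mu z l1 l2) * C)"
      by (rule order_trans[OF norm_sum sum_mono]) (auto simp: norm_mult intro!: mult_left_mono b3)
  qed
  also have "\<dots> = (norm (1 / (2 * omega)) + (\<Sum>l\<in>{0..d}. norm (kap mu z l))
                + (\<Sum>(l1, l2)\<in>pairs d. norm (lam mu z l1 l2))) * C"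
    by (simp only: distrib_right sum_distrib_right case_prod_beta split_def)
  also have "\<dots> = KG mu d z * x powr (-3/2)"
    unfolding KG_def C_def by (simp only: mult_ac)
  finally show ?thesis .
qed

lemma gx_tail:
  assumes B: "B \<ge> 1"
  shows "norm (integral {B^2..} (gx mu d z)) \<le> 2 * KG mu d z / B"
proof -
  have "norm (integral {B^2..} (gx mu d z)) \<le> KG mu d z * (- ((B^2) powr (-3/2 + 1)) / (-3/2 + 1))"
  proof (rule tail_lemma(2))
    have B2: "B^2 \<ge> 1" using B by (simp add: one_le_power)
    show "continuous_on {B^2..} (gx mu d z)" by (rule cont_gx) (use B in auto)
    show "norm (gx mu d z x) \<le> KG mu d z * x powr (-3/2)" if "x \<ge> B^2" for x
      using gx_bound[of x] that B2 by auto
  qed (use B in auto)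
  also have "(B^2) powr (-3/2 + 1) = 1 / B"
  proof -
    have "(B^2) powr (-3/2 + 1) = (B powr 2) powr (-1/2)" using B by (simp add: powr_realpow)
    also have "\<dots> = B powr (-1)" by (simp add: powr_powr)
    also have "\<dots> = 1 / B" using B by (simp add: powr_minus inverse_eq_divide)
    finally show ?thesis .
  qed
  finally show ?thesis by (simp add: mult.commute)
qed

lemma HH_bound:
  assumes B: "B \<ge> 1"
  shows "norm (HH mu d z (complex_of_real B)) \<le> KH mu d z / B"
proof -
  define C where "C = (3::real)^(d+1)"
  have "norm (HH mu d z (complex_of_real B)) \<le> norm (1 / (complex_of_real B * omega) * PPhi mu d {} z (complex_of_real B) * exp (- (omega^2 * (complex_of_real B)^2) / 2))
     + norm (\<Sum>l\<in>{0..d}. kap mu z l * PPhi mu d {l} z (complex_of_real B) * (1 / (complex_of_real B)^2) * Ec (cl mu z l) (complex_of_real B))"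
    unfolding HH_def by (rule norm_triangle_ineq)
  also have "\<dots> \<le> 1 / (B * norm omega) * C + (\<Sum>l\<in>{0..d}. norm (kap mu z l) * C / B)"
  proof (intro add_mono)
    have e1: "norm (exp (- (omega^2 * (complex_of_real B)^2) / 2)) = 1"
      using exp_bound1[OF Imz, where x="B^2"] by simp
    show "norm (1 / (complex_of_real B * omega) * PPhi mu d {} z (complex_of_real B) * exp (- (omega^2 * (complex_of_real B)^2) / 2))
        \<le> 1 / (B * norm omega) * C"
      unfolding norm_mult e1 C_def using B PPhi_bound[OF Imz, where mu=mu and d=d and E="{}" and t=B]
      by (simp add: norm_divide norm_mult divide_right_mono)
    show "norm (\<Sum>l\<in>{0..d}. kap mu z l * PPhi mu d {l} z (complex_of_real B) * (1 / (complex_of_real B)^2) * Ec (cl mu z l) (complex_of_real B))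
        \<le> (\<Sum>l\<in>{0..d}. norm (kap mu z l) * C / B)"
    proof (rule order_trans[OF norm_sum sum_mono])
      fix l
      have eb: "norm (Ec (cl mu z l) (complex_of_real B)) \<le> 1"
        using exp_bound2[OF Imz, where x="B^2" and c="cl mu z l"] Im_cl[OF Imz, where mu=mu and l=l] unfolding Ec_def cl_def by simp
      have "norm (kap mu z l * PPhi mu d {l} z (complex_of_real B) * (1 / (complex_of_real B)^2) * Ec (cl mu z l) (complex_of_real B))
          \<le> norm (kap mu z l) * C * (1 / B^2) * 1"
        unfolding norm_mult C_def using B
        by (intro mult_mono PPhi_bound[OF Imz] eb) (auto simp: norm_divide norm_power)
      also have "\<dots> \<le> norm (kap mu z l) * C / B"
      proof -
        have "1 / B^2 \<le> 1 / B" using B by (simp add: power2_eq_square divide_simps)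
        from mult_left_mono[OF this, of "norm (kap mu z l) * C"]
        show ?thesis by (simp add: C_def)
      qed
      finally show "norm (kap mu z l * PPhi mu d {l} z (complex_of_real B) * (1 / (complex_of_real B)^2) * Ec (cl mu z l) (complex_of_real B))
          \<le> norm (kap mu z l) * C / B" .
    qed
  qed
  also have "\<dots> = KH mu d z / B"
  proof -
    have e: "(\<Sum>l\<in>{0..d}. norm (kap mu z l) * C / B) = (\<Sum>l\<in>{0..d}. norm (kap mu z l)) * C / B"
      by (simp add: sum_distrib_right sum_divide_distrib)
    have "norm omega > 0" using omega_nz by simp
    then show ?thesis unfolding KH_def e using B by (simp add: field_simps C_def)
  qed
  finally show ?thesis .
qed

end

lemma Sminus_props:
  assumes mu_nz: "\<forall>j\<in>{0..d}. mu j \<noteq> 0" and z: "z \<in> Sminus mu d"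
  shows "Im z \<le> 0" "\<forall>l\<in>{0..d}. cl mu z l \<noteq> 0"
proof -
  show "Im z \<le> 0" using z unfolding Sminus_def by auto
  show "\<forall>l\<in>{0..d}. cl mu z l \<noteq> 0"
  proof (intro ballI notI)
    fix l assume l: "l \<in> {0..d}" and c: "cl mu z l = 0"
    have m: "complex_of_real ((mu l)^2) \<noteq> 0" using mu_nz l by simp
    from c have "z = - 1 / complex_of_real ((mu l)^2)" unfolding cl_def using m
      by (simp add: field_simps add_eq_0_iff)
    then have "z = complex_of_real (- 1 / (mu l)^2)" by simp
    then show False using z l unfolding Sminus_def by auto
  qed
qed

context
  fixes mu :: "nat \<Rightarrow> real" and d :: nat and z :: complex
  assumes Imz: "Im z \<le> 0" and clnz: "\<forall>l\<in>{0..d}. cl mu z l \<noteq> 0"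
begin

lemma conv_bound:
  assumes A: "0 < A" "A \<le> B" and B: "B \<ge> 1"
  shows "norm (integral {0..B} (Fint mu d z) - VV mu d z A) \<le> (KH mu d z + 2 * KG mu d z) / B"
proof -
  have intB: "Fint mu d z integrable_on {0..B}"
    by (rule integrable_continuous_interval[OF cont_Fint])
  have c: "integral {0..A} (Fint mu d z) + integral {A..B} (Fint mu d z) = integral {0..B} (Fint mu d z)"
    by (rule Henstock_Kurzweil_Integration.integral_combine) (use A intB in auto)
  have m: "integral {A..B} (Fint mu d z) = HH mu d z (complex_of_real A) - HH mu d z (complex_of_real B) - integral {A^2..B^2} (gx mu d z)"
    by (rule integral_unique[OF main_identity[OF Imz clnz A]])
  have t: "integral {A^2..B^2} (gx mu d z) = integral {A^2..} (gx mu d z) - integral {B^2..} (gx mu d z)"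
    by (rule tail_split) (use A in \<open>auto intro!: gx_integral(1)[OF Imz] power_mono\<close>)
  have "integral {0..B} (Fint mu d z) - VV mu d z A = - HH mu d z (complex_of_real B) + integral {B^2..} (gx mu d z)"
    unfolding VV_def c[symmetric] m t by simp
  also have "norm \<dots> \<le> KH mu d z / B + 2 * KG mu d z / B"
    by (rule order_trans[OF norm_triangle_ineq add_mono]) (use HH_bound[OF Imz B] gx_tail[OF Imz B] in auto)
  finally show ?thesis by (simp add: add_divide_distrib)
qed

lemma conv_tendsto:
  assumes A: "0 < A"
  shows "((\<lambda>B. integral {0..B} (Fint mu d z)) \<longlongrightarrow> VV mu d z A) at_top"
proof (rule LIM_zero_cancel, rule Lim_null_comparison)
  show "\<forall>\<^sub>F B in at_top. norm (integral {0..B} (Fint mu d z) - VV mu d z A) \<le> (KH mu d z + 2 * KG mu d z) / B"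
    using eventually_ge_at_top[of "max A 1"] by eventually_elim (use A in \<open>auto intro!: conv_bound\<close>)
  show "((\<lambda>B. (KH mu d z + 2 * KG mu d z) / B) \<longlongrightarrow> 0) at_top"
    by (intro tendsto_divide_0[OF tendsto_const] filterlim_at_top_imp_at_infinity filterlim_ident)
qed

lemma Ilim_eq: "0 < A \<Longrightarrow> Ilim mu d z = VV mu d z A"
  unfolding Ilim_def by (rule tendsto_Lim[OF _ conv_tendsto]) auto

lemma Ilim_bound:
  assumes B: "B \<ge> 1"
  shows "norm (integral {0..B} (Fint mu d z) - Ilim mu d z) \<le> (KH mu d z + 2 * KG mu d z) / B"
  using conv_bound[of B B] Ilim_eq[of B] B by auto

end

lemma Ilim_expand:
  assumes Imz: "Im z \<le> 0" and clnz: "\<forall>l\<in>{0..d}. cl mu z l \<noteq> 0" and A: "A > 0"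
  shows "Ilim mu d z = integral {0..A} (Fint mu d z)
     + 1 / (complex_of_real A * omega) * PPhi mu d {} z (complex_of_real A) * exp (- (omega^2 * (complex_of_real A)^2) / 2)
     - 1 / (2 * omega) * integral {A^2..} (G1x mu d z)
     + (\<Sum>l\<in>{0..d}. kap mu z l * PPhi mu d {l} z (complex_of_real A) * (1 / complex_of_real (A^2)) * Ec (cl mu z l) (complex_of_real A))
     - (\<Sum>l\<in>{0..d}. kap mu z l * integral {A^2..} (G2x mu d z l))
     + (\<Sum>(l1, l2)\<in>pairs d. lam mu z l1 l2 * integral {A^2..} (G3x mu d z l1 l2))"
proof -
  have A2: "A^2 > 0" using A by simp
  show ?thesis
    unfolding Ilim_eq[OF Imz clnz A] VV_def gx_integral(2)[OF Imz A2] HH_def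
    by (simp add: algebra_simps)
qed

lemma part_a:
  fixes d :: nat and mu :: "nat \<Rightarrow> real" and z :: complex
  assumes mu_nz: "\<forall>j\<in>{0..d}. mu j \<noteq> 0" and zS: "z \<in> Sminus mu d"
  shows "       ((\<lambda>B. integral {0..B} (Fint mu d z)) \<longlongrightarrow> Ilim mu d z) at_top \<and>
       (\<forall>A::real. A > 0 \<longrightarrow>
          (\<lambda>x::real. PPhi mu d {} z (complex_of_real (sqrt x)) * exp (- (omega^2 * complex_of_real x) / 2)
              / complex_of_real (x powr (3/2))) absolutely_integrable_on {A^2..} \<and>
          (\<forall>l\<in>{0..d}. (\<lambda>x::real. PPhi mu d {l} z (complex_of_real (sqrt x)) * (1 / complex_of_real (x^2))
              * exp (- (omega^2 * complex_of_real x / 2) * (1 + complex_of_real ((mu l)^2) * z)))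
              absolutely_integrable_on {A^2..}) \<and>
          (\<forall>l1\<in>{0..d}. \<forall>l2\<in>{0..d}. l1 \<noteq> l2 \<longrightarrow>
              (\<lambda>x::real. PPhi mu d {l1, l2} z (complex_of_real (sqrt x)) * (1 / complex_of_real (x powr (3/2)))
              * exp (- (omega^2 * complex_of_real x / 2)
                     * (1 + complex_of_real ((mu l1)^2) * z + complex_of_real ((mu l2)^2) * z)))
              absolutely_integrable_on {A^2..}) \<and>
          Ilim mu d z =
              integral {0..A} (Fint mu d z)
            + 1 / (complex_of_real A * omega) * PPhi mu d {} z (complex_of_real A)
                * exp (- (omega^2 * (complex_of_real A)^2) / 2)
            - 1 / (2 * omega) * integral {A^2..} (\<lambda>x::real.
                PPhi mu d {} z (complex_of_real (sqrt x)) * exp (- (omega^2 * complex_of_real x) / 2)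
                / complex_of_real (x powr (3/2)))
            + (\<Sum>l\<in>{0..d}. complex_of_real (mu l) * sqrtm z /
                 (complex_of_real (sqrt (2*pi)) * omega^2 * (1 + complex_of_real ((mu l)^2) * z))
                 * PPhi mu d {l} z (complex_of_real A) * (1 / complex_of_real (A^2))
                 * exp (- (omega^2 * (complex_of_real A)^2 / 2) * (1 + complex_of_real ((mu l)^2) * z)))
            - (\<Sum>l\<in>{0..d}. complex_of_real (mu l) * sqrtm z /
                 (complex_of_real (sqrt (2*pi)) * omega^2 * (1 + complex_of_real ((mu l)^2) * z))
                 * integral {A^2..} (\<lambda>x::real. PPhi mu d {l} z (complex_of_real (sqrt x))
                     * (1 / complex_of_real (x^2))
                     * exp (- (omega^2 * complex_of_real x / 2) * (1 + complex_of_real ((mu l)^2) * z))))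
            + (\<Sum>(l1, l2)\<in>{(a, b). a \<in> {0..d} \<and> b \<in> {0..d} \<and> a \<noteq> b}.
                 complex_of_real (mu l1 * mu l2) * z /
                 (complex_of_real (4 * pi) * omega * (1 + complex_of_real ((mu l1)^2) * z))
                 * integral {A^2..} (\<lambda>x::real. PPhi mu d {l1, l2} z (complex_of_real (sqrt x))
                     * (1 / complex_of_real (x powr (3/2)))
                     * exp (- (omega^2 * complex_of_real x / 2)
                            * (1 + complex_of_real ((mu l1)^2) * z + complex_of_real ((mu l2)^2) * z)))))"
proof -
  note P = Sminus_props[OF mu_nz zS]
  have lim: "((\<lambda>B. integral {0..B} (Fint mu d z)) \<longlongrightarrow> Ilim mu d z) at_top"
    using conv_tendsto[OF P, of 1] Ilim_eq[OF P, of 1] by simp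
  have rest: "G1x mu d z absolutely_integrable_on {A^2..} \<and>
     (\<forall>l\<in>{0..d}. G2x mu d z l absolutely_integrable_on {A^2..}) \<and>
     (\<forall>l1\<in>{0..d}. \<forall>l2\<in>{0..d}. l1 \<noteq> l2 \<longrightarrow> G3x mu d z l1 l2 absolutely_integrable_on {A^2..}) \<and>
     Ilim mu d z = integral {0..A} (Fint mu d z)
     + 1 / (complex_of_real A * omega) * PPhi mu d {} z (complex_of_real A) * exp (- (omega^2 * (complex_of_real A)^2) / 2)
     - 1 / (2 * omega) * integral {A^2..} (G1x mu d z)
     + (\<Sum>l\<in>{0..d}. kap mu z l * PPhi mu d {l} z (complex_of_real A) * (1 / complex_of_real (A^2)) * Ec (cl mu z l) (complex_of_real A))
     - (\<Sum>l\<in>{0..d}. kap mu z l * integral {A^2..} (G2x mu d z l))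
     + (\<Sum>(l1, l2)\<in>pairs d. lam mu z l1 l2 * integral {A^2..} (G3x mu d z l1 l2))" if A: "A > 0" for A
  proof -
    have A2: "A^2 > 0" using A by simp
    show ?thesis using AI1[OF P(1) A2] AI2[OF P(1) A2] AI3[OF P(1) A2] Ilim_expand[OF P A] by blast
  qed
  show ?thesis
    using lim rest
    unfolding G1x_def[abs_def] G2x_def[abs_def] G3x_def[abs_def] kap_def lam_def cl_def Ec_def pairs_def
    by simp
qed

lemma Phi_comp_cont [continuous_intros]:
  "continuous_on S f \<Longrightarrow> continuous_on S (\<lambda>x. Phi (f x))"
  by (rule continuous_on_compose2[OF continuous_Phi[of UNIV]]) auto

lemma sq_comp_cont [continuous_intros]:
  "continuous_on S f \<Longrightarrow> (\<And>x. x \<in> S \<Longrightarrow> Im (f x) \<le> 0) \<Longrightarrow> continuous_on S (\<lambda>x. sq (f x))"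
  by (rule continuous_on_compose2[OF continuous_on_sq]) auto

lemma closed_lower: "closed {z::complex. Im z \<le> 0}"
  by (intro closed_Collect_le continuous_intros)

lemma open_lower: "open {z::complex. Im z < 0}"
  by (intro open_Collect_less continuous_intros)

definition Fs :: "(nat \<Rightarrow> real) \<Rightarrow> nat \<Rightarrow> complex \<Rightarrow> real \<Rightarrow> complex" where
  "Fs mu d x t = (\<Prod>j\<in>{0..d}. Phi (complex_of_real (mu j) * sq x * omega * complex_of_real t))
      * exp (- (omega^2 * (complex_of_real t)^2) / 2) * omega"

lemma Fint_Fs: "Im x \<le> 0 \<Longrightarrow> Fint mu d x t = Fs mu d x t"
  unfolding Fint_def Fs_def PPhi_def using sqrtm_sq by simp

lemma cont_In: "continuous_on {z. Im z \<le> 0} (\<lambda>x. integral {0..N} (Fint mu d x))"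
proof -
  have "continuous_on ({z. Im z \<le> 0} \<times> cbox 0 N) (\<lambda>(x, t). Fs mu d x t)"
    unfolding Fs_def case_prod_beta
    by (intro continuous_intros continuous_on_prod) auto
  then have "continuous_on ({z. Im z \<le> 0} \<times> cbox 0 N) (\<lambda>(x, t). Fint mu d x t)"
    by (rule continuous_on_eq) (auto simp: Fint_Fs)
  from integral_continuous_on_param[OF this] show ?thesis by simp
qed

definition dsq :: "complex \<Rightarrow> complex" where
  "dsq x = inverse (2 * csqrt (\<i> * x)) * \<i> * (1 - \<i>) / complex_of_real (sqrt 2)"

lemma lower_not_nonpos: "Im x < 0 \<Longrightarrow> \<i> * x \<notin> \<real>\<^sub>\<le>\<^sub>0"
  by (auto simp: complex_nonpos_Reals_iff)

lemma sq_deriv: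
  assumes x: "Im x < 0" shows "(sq has_field_derivative dsq x) (at x)"
proof -
  have "csqrt (\<i> * x) \<noteq> 0" using x by auto
  then show ?thesis
    unfolding sq_def[abs_def] dsq_def using x
    by (auto intro!: derivative_eq_intros DERIV_chain2[OF has_field_derivative_csqrt] lower_not_nonpos
             simp: divide_simps)
qed

definition Fsd :: "(nat \<Rightarrow> real) \<Rightarrow> nat \<Rightarrow> complex \<Rightarrow> real \<Rightarrow> complex" where
  "Fsd mu d x t = (\<Sum>l\<in>{0..d}. (exp (- ((complex_of_real (mu l) * sq x * omega * complex_of_real t)^2) / 2)
        / complex_of_real (sqrt (2*pi)) * (complex_of_real (mu l) * dsq x * omega * complex_of_real t))
        * (\<Prod>j\<in>{0..d} - {l}. Phi (complex_of_real (mu j) * sq x * omega * complex_of_real t)))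
      * exp (- (omega^2 * (complex_of_real t)^2) / 2) * omega"

lemma Fs_deriv:
  assumes "Im x < 0"
  shows "((\<lambda>x. Fs mu d x t) has_field_derivative Fsd mu d x t) (at x)"
proof -
  have "((\<lambda>x. \<Prod>j\<in>{0..d}. Phi (complex_of_real (mu j) * sq x * omega * complex_of_real t)) has_field_derivative
      (\<Sum>l\<in>{0..d}. (exp (- ((complex_of_real (mu l) * sq x * omega * complex_of_real t)^2) / 2)
        / complex_of_real (sqrt (2*pi)) * (complex_of_real (mu l) * dsq x * omega * complex_of_real t))
        * (\<Prod>j\<in>{0..d} - {l}. Phi (complex_of_real (mu j) * sq x * omega * complex_of_real t)))) (at x)"
  proof (rule has_field_derivative_prod)
    fix l
    show "((\<lambda>x. Phi (complex_of_real (mu l) * sq x * omega * complex_of_real t)) has_field_derivative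
        (exp (- ((complex_of_real (mu l) * sq x * omega * complex_of_real t)^2) / 2)
        / complex_of_real (sqrt (2*pi)) * (complex_of_real (mu l) * dsq x * omega * complex_of_real t))) (at x)"
      by (rule DERIV_chain2[OF Phi_deriv]) (auto intro!: derivative_eq_intros sq_deriv assms)
  qed
  then show ?thesis unfolding Fs_def[abs_def] Fsd_def
    by (auto intro!: derivative_eq_intros)
qed

lemma cont_dsq: "continuous_on {z. Im z < 0} dsq"
proof -
  have "continuous_on {z. Im z < 0} (\<lambda>x. csqrt (\<i> * x))"
    by (intro continuous_on_compose2[OF continuous_on_csqrt] continuous_intros)
       (use lower_not_nonpos in auto)
  moreover have "\<forall>x\<in>{z. Im z < 0}. 2 * csqrt (\<i> * x) \<noteq> 0" by auto
  ultimately have "continuous_on {z. Im z < 0} (\<lambda>x. inverse (2 * csqrt (\<i> * x)) * \<i> * (1 - \<i>) / complex_of_real (sqrt 2))"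
    by (intro continuous_intros) auto
  then show ?thesis by (simp add: dsq_def[abs_def])
qed

lemma holo_In: "(\<lambda>x. integral {0..N} (Fint mu d x)) holomorphic_on {z. Im z < 0}"
proof -
  have "(\<lambda>x. integral (cbox 0 N) (Fs mu d x)) holomorphic_on {z. Im z < 0}"
  proof (rule leibniz_rule_holomorphic[where fx="Fsd mu d"])
    show "\<And>x t. x \<in> {z. Im z < 0} \<Longrightarrow> t \<in> cbox 0 N \<Longrightarrow>
        ((\<lambda>x. Fs mu d x t) has_field_derivative Fsd mu d x t) (at x within {z. Im z < 0})"
      using Fs_deriv by (auto intro: has_field_derivative_at_within)
    show "\<And>x. x \<in> {z. Im z < 0} \<Longrightarrow> Fs mu d x integrable_on cbox 0 N"
      unfolding Fs_def
      by (intro integrable_continuous continuous_intros) auto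
    show "continuous_on ({z. Im z < 0} \<times> cbox 0 N) (\<lambda>(x, t). Fsd mu d x t)"
      unfolding Fsd_def case_prod_beta
      by (intro continuous_intros continuous_on_prod continuous_on_compose2[OF cont_dsq])
         (auto simp: less_imp_le)
    show "convex {z. Im z < 0}" by (rule convex_halfspace_Im_lt)
  qed
  then show ?thesis
  proof (rule holomorphic_transform)
    fix x assume "x \<in> {z. Im z < 0}"
    then have "Fs mu d x = Fint mu d x" using Fint_Fs[of x] by auto
    then show "integral (cbox 0 N) (Fs mu d x) = integral {0..N} (Fint mu d x)" by simp
  qed
qed

definition Kb :: "(nat \<Rightarrow> real) \<Rightarrow> nat \<Rightarrow> complex \<Rightarrow> real" where
  "Kb mu d z = KH mu d z + 2 * KG mu d z"

definition Bad :: "(nat \<Rightarrow> real) \<Rightarrow> nat \<Rightarrow> complex set" where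
  "Bad mu d = {complex_of_real (- 1 / (mu j)^2) | j. j \<in> {0..d}}"

lemma Sminus_Bad: "Sminus mu d = {z. Im z \<le> 0} - Bad mu d"
  unfolding Sminus_def Bad_def by simp

lemma finite_Bad: "finite (Bad mu d)"
proof -
  have "Bad mu d = (\<lambda>j. complex_of_real (- 1 / (mu j)^2)) ` {0..d}" unfolding Bad_def by auto
  then show ?thesis by simp
qed

lemma sqrtm_cont_S: "continuous_on (Sminus mu d) sqrtm"
proof -
  have "continuous_on (Sminus mu d) sq"
    by (rule continuous_on_subset[OF continuous_on_sq]) (auto simp: Sminus_def)
  then show ?thesis
    by (rule continuous_on_eq) (auto simp: Sminus_def sqrtm_sq)
qed

lemma cont_Kb:
  assumes mu_nz: "\<forall>j\<in>{0..d}. mu j \<noteq> 0"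
  shows "continuous_on (Sminus mu d) (Kb mu d)"
proof -
  have clnz: "\<And>z l. z \<in> Sminus mu d \<Longrightarrow> l \<in> {0..d} \<Longrightarrow> cl mu z l \<noteq> 0"
    using Sminus_props[OF mu_nz] by blast
  have ck: "continuous_on (Sminus mu d) (\<lambda>z. kap mu z l)" if "l \<in> {0..d}" for l
    unfolding kap_def cl_def
    by (intro continuous_intros sqrtm_cont_S) (use clnz that omega_nz in \<open>auto simp: cl_def\<close>)
  have cl': "continuous_on (Sminus mu d) (\<lambda>z. lam mu z l1 l2)" if "l1 \<in> {0..d}" for l1 l2
    unfolding lam_def cl_def
    by (intro continuous_intros) (use clnz that omega_nz in \<open>auto simp: cl_def\<close>)
  have s1: "continuous_on (Sminus mu d) (\<lambda>z. \<Sum>l\<in>{0..d}. norm (kap mu z l))"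
    by (intro continuous_on_sum continuous_on_norm ck) auto
  have s2: "continuous_on (Sminus mu d) (\<lambda>z. \<Sum>(l1, l2)\<in>pairs d. norm (lam mu z l1 l2))"
    by (intro continuous_on_sum) (auto simp: pairs_def split: prod.split intro!: continuous_on_norm cl')
  show ?thesis unfolding Kb_def KH_def KG_def
    by (intro continuous_intros s1 s2)
qed

lemma local_nbhd:
  assumes mu_nz: "\<forall>j\<in>{0..d}. mu j \<noteq> 0" and z0: "z0 \<in> Sminus mu d"
  obtains r M where "r > 0" "ball z0 r \<inter> Bad mu d = {}"
    "\<And>z. z \<in> {z. Im z \<le> 0} \<inter> cball z0 r \<Longrightarrow> z \<in> Sminus mu d \<and> Kb mu d z \<le> M"
proof -
  have "open (- Bad mu d)" using finite_Bad by (simp add: finite_imp_closed open_Compl)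
  moreover have "z0 \<in> - Bad mu d" using z0 by (simp add: Sminus_Bad)
  ultimately obtain e where e: "e > 0" "ball z0 e \<subseteq> - Bad mu d" using open_contains_ball by blast
  define r where "r = e / 2"
  have r: "r > 0" "cball z0 r \<subseteq> ball z0 e" using e unfolding r_def by auto
  define T where "T = {z. Im z \<le> 0} \<inter> cball z0 r"
  have TS: "T \<subseteq> Sminus mu d" using r e unfolding T_def Sminus_Bad by auto
  have "compact T" unfolding T_def by (intro closed_Int_compact closed_lower compact_cball)
  moreover have "continuous_on T (Kb mu d)" by (rule continuous_on_subset[OF cont_Kb[OF mu_nz] TS])
  ultimately have "compact (Kb mu d ` T)" using compact_continuous_image by blast
  then obtain M where M: "\<forall>x\<in>Kb mu d ` T. norm x \<le> M" using compact_imp_bounded bounded_iff by metis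
  show ?thesis
  proof (rule that[of r M])
    show "r > 0" by fact
    show "ball z0 r \<inter> Bad mu d = {}" using e r ball_subset_cball[of z0 r] by blast
    fix z assume "z \<in> {z. Im z \<le> 0} \<inter> cball z0 r"
    then have "z \<in> T" unfolding T_def by auto
    then show "z \<in> Sminus mu d \<and> Kb mu d z \<le> M" using TS M by force
  qed
qed

lemma unif_conv:
  assumes mu_nz: "\<forall>j\<in>{0..d}. mu j \<noteq> 0"
    and T: "\<And>z. z \<in> T \<Longrightarrow> z \<in> Sminus mu d \<and> Kb mu d z \<le> M"
  shows "uniform_limit T (\<lambda>n z. integral {0..real n} (Fint mu d z)) (Ilim mu d) sequentially"
proof (rule uniform_limitI)
  fix e :: real assume e: "e > 0"
  obtain N :: nat where N: "N > (\<bar>M\<bar> + 1) / e" using reals_Archimedean2 by blast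
  show "\<forall>\<^sub>F n in sequentially. \<forall>z\<in>T. dist (integral {0..real n} (Fint mu d z)) (Ilim mu d z) < e"
  proof (rule eventually_sequentiallyI[of "N + 1"], intro ballI)
    fix n z assume n: "N + 1 \<le> n" and z: "z \<in> T"
    note P = Sminus_props[OF mu_nz T[OF z, THEN conjunct1]]
    have n1: "real n \<ge> 1" using n by simp
    have "dist (integral {0..real n} (Fint mu d z)) (Ilim mu d z) \<le> Kb mu d z / real n"
      using Ilim_bound[OF P n1] unfolding dist_norm Kb_def .
    also have "\<dots> \<le> \<bar>M\<bar> / real n" using T[OF z] n1 by (intro divide_right_mono) auto
    also have "\<dots> < e"
    proof -
      have "(\<bar>M\<bar> + 1) / e < real n" using N n by linarith
      then have "\<bar>M\<bar> + 1 < real n * e" using e by (simp add: divide_less_eq)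
      then show ?thesis using n1 by (simp add: divide_less_eq mult.commute)
    qed
    finally show "dist (integral {0..real n} (Fint mu d z)) (Ilim mu d z) < e" .
  qed
qed

lemma part_b:
  assumes mu_nz: "\<forall>j\<in>{0..d}. mu j \<noteq> 0"
  shows "continuous_on (Sminus mu d) (Ilim mu d) \<and> (Ilim mu d) analytic_on {z. Im z < 0}"
proof
  show "continuous_on (Sminus mu d) (Ilim mu d)"
    unfolding continuous_on_eq_continuous_within
  proof
    fix z0 assume z0: "z0 \<in> Sminus mu d"
    obtain r M where r: "r > 0" "ball z0 r \<inter> Bad mu d = {}"
      and T: "\<And>z. z \<in> {z. Im z \<le> 0} \<inter> cball z0 r \<Longrightarrow> z \<in> Sminus mu d \<and> Kb mu d z \<le> M"
      using local_nbhd[OF mu_nz z0] by blast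
    define T where "T = {z. Im z \<le> 0} \<inter> cball z0 r"
    have "continuous_on T (Ilim mu d)"
    proof (rule uniform_limit_theorem)
      show "\<forall>\<^sub>F n in sequentially. continuous_on T (\<lambda>z. integral {0..real n} (Fint mu d z))"
        by (intro always_eventually allI continuous_on_subset[OF cont_In]) (auto simp: T_def)
      show "uniform_limit T (\<lambda>n z. integral {0..real n} (Fint mu d z)) (Ilim mu d) sequentially"
        by (rule unif_conv[OF mu_nz]) (use T in \<open>auto simp: T_def\<close>)
    qed auto
    moreover have "z0 \<in> T" using z0 r unfolding T_def Sminus_def by auto
    ultimately have "continuous (at z0 within T) (Ilim mu d)"
      by (simp add: continuous_on_eq_continuous_within)
    moreover have "at z0 within T = at z0 within Sminus mu d"
    proof (rule at_within_nhd[of _ "ball z0 r"])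
      show "z0 \<in> ball z0 r" "open (ball z0 r)" using r by auto
      show "T \<inter> ball z0 r - {z0} = Sminus mu d \<inter> ball z0 r - {z0}"
        using r unfolding T_def Sminus_Bad by auto
    qed
    ultimately show "continuous (at z0 within Sminus mu d) (Ilim mu d)" by simp
  qed
  have "Ilim mu d holomorphic_on {z. Im z < 0}"
    unfolding holomorphic_on_def
  proof
    fix z0 :: complex assume z0: "z0 \<in> {z. Im z < 0}"
    then have z0S: "z0 \<in> Sminus mu d" unfolding Sminus_def by auto
    obtain r M where r: "r > 0" "ball z0 r \<inter> Bad mu d = {}"
      and T: "\<And>z. z \<in> {z. Im z \<le> 0} \<inter> cball z0 r \<Longrightarrow> z \<in> Sminus mu d \<and> Kb mu d z \<le> M"
      using local_nbhd[OF mu_nz z0S] by blast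
    define r' where "r' = min r (- Im z0 / 2)"
    have r': "r' > 0" using r z0 unfolding r'_def by auto
    have sub: "cball z0 r' \<subseteq> {z. Im z < 0}"
    proof
      fix z assume "z \<in> cball z0 r'"
      then have "norm (z0 - z) \<le> - Im z0 / 2" unfolding r'_def by (auto simp: dist_norm)
      moreover have "\<bar>Im (z0 - z)\<bar> \<le> norm (z0 - z)" by (rule abs_Im_le_cmod)
      ultimately show "z \<in> {z. Im z < 0}" using z0 by auto
    qed
    have sub2: "cball z0 r' \<subseteq> {z. Im z \<le> 0} \<inter> cball z0 r" using sub unfolding r'_def by auto
    obtain "continuous_on (cball z0 r') (Ilim mu d)" "Ilim mu d holomorphic_on ball z0 r'"
    proof (rule holomorphic_uniform_limit[where f="\<lambda>n z. integral {0..real n} (Fint mu d z)"])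
      show "\<forall>\<^sub>F n in sequentially. continuous_on (cball z0 r') (\<lambda>z. integral {0..real n} (Fint mu d z)) \<and>
          (\<lambda>z. integral {0..real n} (Fint mu d z)) holomorphic_on ball z0 r'"
      proof (intro always_eventually allI conjI)
        fix n :: nat
        show "continuous_on (cball z0 r') (\<lambda>z. integral {0..real n} (Fint mu d z))"
          by (rule continuous_on_subset[OF cont_In]) (use sub in auto)
        have "ball z0 r' \<subseteq> {z. Im z < 0}" using sub ball_subset_cball by blast
        then show "(\<lambda>z. integral {0..real n} (Fint mu d z)) holomorphic_on ball z0 r'"
          by (rule holomorphic_on_subset[OF holo_In])
      qed
      show "uniform_limit (cball z0 r') (\<lambda>n z. integral {0..real n} (Fint mu d z)) (Ilim mu d) sequentially"
        by (rule unif_conv[OF mu_nz]) (use T sub2 in blast)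
    qed auto
    then have "Ilim mu d field_differentiable (at z0)"
      using holomorphic_on_imp_differentiable_at[of "Ilim mu d" "ball z0 r'" z0] r' by auto
    then show "Ilim mu d field_differentiable (at z0 within {z. Im z < 0})"
      by (rule field_differentiable_at_within)
  qed
  then show "Ilim mu d analytic_on {z. Im z < 0}"
    by (simp add: analytic_on_open[OF open_lower])
qed


theorem mainTheorem10:
  fixes d :: nat and mu :: "nat \<Rightarrow> real"
  assumes mu_nz: "\<forall>j\<in>{0..d}. mu j \<noteq> 0"
  shows
   "(\<forall>z\<in>Sminus mu d.
       ((\<lambda>B. integral {0..B} (Fint mu d z)) \<longlongrightarrow> Ilim mu d z) at_top \<and>
       (\<forall>A::real. A > 0 \<longrightarrow>
          (\<lambda>x::real. PPhi mu d {} z (complex_of_real (sqrt x)) * exp (- (omega^2 * complex_of_real x) / 2)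
              / complex_of_real (x powr (3/2))) absolutely_integrable_on {A^2..} \<and>
          (\<forall>l\<in>{0..d}. (\<lambda>x::real. PPhi mu d {l} z (complex_of_real (sqrt x)) * (1 / complex_of_real (x^2))
              * exp (- (omega^2 * complex_of_real x / 2) * (1 + complex_of_real ((mu l)^2) * z)))
              absolutely_integrable_on {A^2..}) \<and>
          (\<forall>l1\<in>{0..d}. \<forall>l2\<in>{0..d}. l1 \<noteq> l2 \<longrightarrow>
              (\<lambda>x::real. PPhi mu d {l1, l2} z (complex_of_real (sqrt x)) * (1 / complex_of_real (x powr (3/2)))
              * exp (- (omega^2 * complex_of_real x / 2)
                     * (1 + complex_of_real ((mu l1)^2) * z + complex_of_real ((mu l2)^2) * z)))
              absolutely_integrable_on {A^2..}) \<and>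
          Ilim mu d z =
              integral {0..A} (Fint mu d z)
            + 1 / (complex_of_real A * omega) * PPhi mu d {} z (complex_of_real A)
                * exp (- (omega^2 * (complex_of_real A)^2) / 2)
            - 1 / (2 * omega) * integral {A^2..} (\<lambda>x::real.
                PPhi mu d {} z (complex_of_real (sqrt x)) * exp (- (omega^2 * complex_of_real x) / 2)
                / complex_of_real (x powr (3/2)))
            + (\<Sum>l\<in>{0..d}. complex_of_real (mu l) * sqrtm z /
                 (complex_of_real (sqrt (2*pi)) * omega^2 * (1 + complex_of_real ((mu l)^2) * z))
                 * PPhi mu d {l} z (complex_of_real A) * (1 / complex_of_real (A^2))
                 * exp (- (omega^2 * (complex_of_real A)^2 / 2) * (1 + complex_of_real ((mu l)^2) * z)))
            - (\<Sum>l\<in>{0..d}. complex_of_real (mu l) * sqrtm z /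
                 (complex_of_real (sqrt (2*pi)) * omega^2 * (1 + complex_of_real ((mu l)^2) * z))
                 * integral {A^2..} (\<lambda>x::real. PPhi mu d {l} z (complex_of_real (sqrt x))
                     * (1 / complex_of_real (x^2))
                     * exp (- (omega^2 * complex_of_real x / 2) * (1 + complex_of_real ((mu l)^2) * z))))
            + (\<Sum>(l1, l2)\<in>{(a, b). a \<in> {0..d} \<and> b \<in> {0..d} \<and> a \<noteq> b}.
                 complex_of_real (mu l1 * mu l2) * z /
                 (complex_of_real (4 * pi) * omega * (1 + complex_of_real ((mu l1)^2) * z))
                 * integral {A^2..} (\<lambda>x::real. PPhi mu d {l1, l2} z (complex_of_real (sqrt x))
                     * (1 / complex_of_real (x powr (3/2)))
                     * exp (- (omega^2 * complex_of_real x / 2)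
                            * (1 + complex_of_real ((mu l1)^2) * z + complex_of_real ((mu l2)^2) * z))))))
    \<and> continuous_on (Sminus mu d) (Ilim mu d)
    \<and> (Ilim mu d) analytic_on {z. Im z < 0}"
proof -
  have "\<forall>z\<in>Sminus mu d.        ((\<lambda>B. integral {0..B} (Fint mu d z)) \<longlongrightarrow> Ilim mu d z) at_top \<and>
       (\<forall>A::real. A > 0 \<longrightarrow>
          (\<lambda>x::real. PPhi mu d {} z (complex_of_real (sqrt x)) * exp (- (omega^2 * complex_of_real x) / 2)
              / complex_of_real (x powr (3/2))) absolutely_integrable_on {A^2..} \<and>
          (\<forall>l\<in>{0..d}. (\<lambda>x::real. PPhi mu d {l} z (complex_of_real (sqrt x)) * (1 / complex_of_real (x^2))
              * exp (- (omega^2 * complex_of_real x / 2) * (1 + complex_of_real ((mu l)^2) * z)))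
              absolutely_integrable_on {A^2..}) \<and>
          (\<forall>l1\<in>{0..d}. \<forall>l2\<in>{0..d}. l1 \<noteq> l2 \<longrightarrow>
              (\<lambda>x::real. PPhi mu d {l1, l2} z (complex_of_real (sqrt x)) * (1 / complex_of_real (x powr (3/2)))
              * exp (- (omega^2 * complex_of_real x / 2)
                     * (1 + complex_of_real ((mu l1)^2) * z + complex_of_real ((mu l2)^2) * z)))
              absolutely_integrable_on {A^2..}) \<and>
          Ilim mu d z =
              integral {0..A} (Fint mu d z)
            + 1 / (complex_of_real A * omega) * PPhi mu d {} z (complex_of_real A)
                * exp (- (omega^2 * (complex_of_real A)^2) / 2)
            - 1 / (2 * omega) * integral {A^2..} (\<lambda>x::real.
                PPhi mu d {} z (complex_of_real (sqrt x)) * exp (- (omega^2 * complex_of_real x) / 2)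
                / complex_of_real (x powr (3/2)))
            + (\<Sum>l\<in>{0..d}. complex_of_real (mu l) * sqrtm z /
                 (complex_of_real (sqrt (2*pi)) * omega^2 * (1 + complex_of_real ((mu l)^2) * z))
                 * PPhi mu d {l} z (complex_of_real A) * (1 / complex_of_real (A^2))
                 * exp (- (omega^2 * (complex_of_real A)^2 / 2) * (1 + complex_of_real ((mu l)^2) * z)))
            - (\<Sum>l\<in>{0..d}. complex_of_real (mu l) * sqrtm z /
                 (complex_of_real (sqrt (2*pi)) * omega^2 * (1 + complex_of_real ((mu l)^2) * z))
                 * integral {A^2..} (\<lambda>x::real. PPhi mu d {l} z (complex_of_real (sqrt x))
                     * (1 / complex_of_real (x^2))
                     * exp (- (omega^2 * complex_of_real x / 2) * (1 + complex_of_real ((mu l)^2) * z))))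
            + (\<Sum>(l1, l2)\<in>{(a, b). a \<in> {0..d} \<and> b \<in> {0..d} \<and> a \<noteq> b}.
                 complex_of_real (mu l1 * mu l2) * z /
                 (complex_of_real (4 * pi) * omega * (1 + complex_of_real ((mu l1)^2) * z))
                 * integral {A^2..} (\<lambda>x::real. PPhi mu d {l1, l2} z (complex_of_real (sqrt x))
                     * (1 / complex_of_real (x powr (3/2)))
                     * exp (- (omega^2 * complex_of_real x / 2)
                            * (1 + complex_of_real ((mu l1)^2) * z + complex_of_real ((mu l2)^2) * z)))))"
    using part_a[OF mu_nz] by blast
  then show ?thesis using part_b[OF mu_nz] by blast
qed

end
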